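(* Let $\mathcal{D}$ be a set of discounting functions. For every $\mathrm{LTL}^{\mathrm{disc}}[\mathcal{D}]$ formula $\varphi$ over $AP$ and every threshold $v\in[0,1]$, there exists an alternating weak automaton $\mathcal{A}_{\varphi,v}$ over the alphabet $2^{AP}$ such that for every computation $\pi$: (1) if $[\![\pi,\varphi]\!]>v$, then $\mathcal{A}_{\varphi,v}$ accepts $\pi$; (2) if $\mathcal{A}_{\varphi,v}$ accepts $\pi$ and $\pi$ is a lasso computation, then $[\![\pi,\varphi]\!]>v$.
   Context: Let $AP$ be a finite set of atomic propositions. A computation is an infinite word $\pi=\pi_0\pi_1\cdots\in(2^{AP})^\omega$, $\pi^i=\pi_i\pi_{i+1}\cdots$; a lasso computation is one of the form $u\cdot w^\omega$ with $u,w\in(2^{AP})^*$, $w\neq\epsilon$. A discounting function is a strictly decreasing $\eta:\mathbb{N}\to[0,1]$ with $\lim_{i\to\infty}\eta(i)=0$. $\mathrm{LTL}^{\mathrm{disc}}[\mathcal{D}]$ formulas: $\varphi ::= \mathtt{True}\mid p\mid\neg\varphi\mid\varphi\vee\varphi\mid\mathsf{X}\varphi\mid\varphi\,\mathsf{U}\,\varphi\mid\varphi\,\mathsf{U}_\eta\,\varphi$ ($p\in AP$, $\eta\in\mathcal{D}$), with values: $[\![\pi,\mathtt{True}]\!]=1$; $[\![\pi,p]\!]=1$ if $p\in\pi_0$, else $0$; $[\![\pi,\neg\varphi]\!]=1-[\![\pi,\varphi]\!]$; $[\![\pi,\varphi\vee\psi]\!]=\max\{[\![\pi,\varphi]\!],[\![\pi,\psi]\!]\}$;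 $[\![\pi,\mathsf{X}\varphi]\!]=[\![\pi^1,\varphi]\!]$; $[\![\pi,\varphi\,\mathsf{U}\,\psi]\!]=\sup_{i\ge0}\min\{[\![\pi^i,\psi]\!],\min_{0\le j<i}[\![\pi^j,\varphi]\!]\}$; $[\![\pi,\varphi\,\mathsf{U}_\eta\,\psi]\!]=\sup_{i\ge0}\min\{\eta(i)[\![\pi^i,\psi]\!],\min_{0\le j<i}\eta(j)[\![\pi^j,\varphi]\!]\}$. An alternating B\"uchi automaton is $\mathcal{A}=\langle\Sigma,Q,q_{in},\delta,\alpha\rangle$ with finite alphabet $\Sigma$, finite state set $Q$, initial state $q_{in}$, transition function $\delta:Q\times\Sigma\to\mathcal{B}^+(Q)$ (positive Boolean formulas over $Q$, including $\mathtt{True},\mathtt{False}$) and accepting set $\alpha\subseteq Q$. A run on $w=\sigma_0\sigma_1\cdots$ is a DAG with nodes in $Q\times\mathbb{N}$, level $0$ being $\{q_{in}\}$, such that for each node $\langle q,l\rangle$ the set of its successors at level $l+1$ satisfies $\delta(q,\sigma_l)$; it is accepting if every infinite path visits $\alpha$ infinitely often, and $w$ is accepted if some run is accepting. The automaton is weak if $Q$ can be partitioned into sets $Q_1,\dots,Q_k$, each contained in or disjoint from $\alpha$, with a partial order on them such that transitions from a state in $Q_i$ only lead to states in sets $Q_j\le Q_i$. *)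

theory Defs
  imports Complex_Main "HOL-Library.Disjoint_Sets"
begin

definition discounting :: "(nat \<Rightarrow> real) \<Rightarrow> bool" where
  "discounting \<eta> \<longleftrightarrow>
     (\<forall>i. 0 \<le> \<eta> i \<and> \<eta> i \<le> 1) \<and>
     (\<forall>i j. i < j \<longrightarrow> \<eta> j < \<eta> i) \<and>
     \<eta> \<longlonglongrightarrow> 0"

datatype 'ap ltld =
    LTrue
  | Prop 'ap
  | Neg "'ap ltld"
  | Or "'ap ltld" "'ap ltld"
  | Next "'ap ltld"
  | Until "'ap ltld" "'ap ltld"
  | DUntil "'ap ltld" "nat \<Rightarrow> real" "'ap ltld"

fun discs :: "'ap ltld \<Rightarrow> (nat \<Rightarrow> real) set" where
  "discs LTrue = {}"
| "discs (Prop p) = {}"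
| "discs (Neg f) = discs f"
| "discs (Or f g) = discs f \<union> discs g"
| "discs (Next f) = discs f"
| "discs (Until f g) = discs f \<union> discs g"
| "discs (DUntil f \<eta> g) = insert \<eta> (discs f \<union> discs g)"

definition ltld_over :: "(nat \<Rightarrow> real) set \<Rightarrow> 'ap ltld \<Rightarrow> bool" where
  "ltld_over D f \<longleftrightarrow> discs f \<subseteq> D"

type_synonym 'ap comp = "nat \<Rightarrow> 'ap set"

definition suffix_comp :: "nat \<Rightarrow> 'ap comp \<Rightarrow> 'ap comp" where
  "suffix_comp i \<pi> = (\<lambda>k. \<pi> (i + k))"

text \<open>Minimum over j < i of f j, with the empty minimum equal to 1
  (all values lie in [0,1], so inserting 1 is harmless).\<close>
definition min_pre :: "(nat \<Rightarrow> real) \<Rightarrow> nat \<Rightarrow> real" where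
  "min_pre f i = Min (insert 1 (f ` {..<i}))"

fun val :: "'ap comp \<Rightarrow> 'ap ltld \<Rightarrow> real" where
  "val \<pi> LTrue = 1"
| "val \<pi> (Prop p) = (if p \<in> \<pi> 0 then 1 else 0)"
| "val \<pi> (Neg f) = 1 - val \<pi> f"
| "val \<pi> (Or f g) = max (val \<pi> f) (val \<pi> g)"
| "val \<pi> (Next f) = val (suffix_comp 1 \<pi>) f"
| "val \<pi> (Until f g) =
     (SUP i. min (val (suffix_comp i \<pi>) g) (min_pre (\<lambda>j. val (suffix_comp j \<pi>) f) i))"
| "val \<pi> (DUntil f \<eta> g) =
     (SUP i. min (\<eta> i * val (suffix_comp i \<pi>) g)
                 (min_pre (\<lambda>j. \<eta> j * val (suffix_comp j \<pi>) f) i))"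

definition lasso :: "'ap comp \<Rightarrow> bool" where
  "lasso \<pi> \<longleftrightarrow> (\<exists>u w. w \<noteq> [] \<and>
     \<pi> = (\<lambda>i. if i < length u then u ! i else w ! ((i - length u) mod length w)))"

datatype 'q pbf = PTrue | PFalse | PVar 'q | PAnd "'q pbf" "'q pbf" | POr "'q pbf" "'q pbf"

fun pbf_sat :: "'q set \<Rightarrow> 'q pbf \<Rightarrow> bool" where
  "pbf_sat S PTrue = True"
| "pbf_sat S PFalse = False"
| "pbf_sat S (PVar q) = (q \<in> S)"
| "pbf_sat S (PAnd a b) = (pbf_sat S a \<and> pbf_sat S b)"
| "pbf_sat S (POr a b) = (pbf_sat S a \<or> pbf_sat S b)"

fun pbf_atoms :: "'q pbf \<Rightarrow> 'q set" where
  "pbf_atoms PTrue = {}"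
| "pbf_atoms PFalse = {}"
| "pbf_atoms (PVar q) = {q}"
| "pbf_atoms (PAnd a b) = pbf_atoms a \<union> pbf_atoms b"
| "pbf_atoms (POr a b) = pbf_atoms a \<union> pbf_atoms b"

text \<open>Alternating Buchi automaton over alphabet 's (the whole type), with
  states drawn from nat (any finite state set can be renamed into nat).\<close>
record 's aba =
  states :: "nat set"
  init :: nat
  trans :: "nat \<Rightarrow> 's \<Rightarrow> nat pbf"
  acc :: "nat set"

definition wf_aba :: "'s aba \<Rightarrow> bool" where
  "wf_aba A \<longleftrightarrow> finite (states A) \<and> init A \<in> states A \<and> acc A \<subseteq> states A \<and>
     (\<forall>q\<in>states A. \<forall>\<sigma>. pbf_atoms (trans A q \<sigma>) \<subseteq> states A)"

text \<open>A run DAG on word w: R l is the set of states at level l, E l q is the set of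
  successors (at level l+1) of node (q,l).\<close>
definition is_run :: "'s aba \<Rightarrow> (nat \<Rightarrow> 's) \<Rightarrow> (nat \<Rightarrow> nat set) \<Rightarrow> (nat \<Rightarrow> nat \<Rightarrow> nat set) \<Rightarrow> bool" where
  "is_run A w R E \<longleftrightarrow>
     R 0 = {init A} \<and>
     (\<forall>l. R l \<subseteq> states A) \<and>
     (\<forall>l. R (Suc l) = (\<Union>q\<in>R l. E l q)) \<and>
     (\<forall>l. \<forall>q\<in>R l. pbf_sat (E l q) (trans A q (w l)))"

definition run_path :: "'s aba \<Rightarrow> (nat \<Rightarrow> nat \<Rightarrow> nat set) \<Rightarrow> (nat \<Rightarrow> nat) \<Rightarrow> bool" where
  "run_path A E p \<longleftrightarrow> p 0 = init A \<and> (\<forall>i. p (Suc i) \<in> E i (p i))"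

definition accepting_run :: "'s aba \<Rightarrow> (nat \<Rightarrow> nat \<Rightarrow> nat set) \<Rightarrow> bool" where
  "accepting_run A E \<longleftrightarrow> (\<forall>p. run_path A E p \<longrightarrow> (\<exists>\<^sub>\<infinity>i. p i \<in> acc A))"

definition accepts :: "'s aba \<Rightarrow> (nat \<Rightarrow> 's) \<Rightarrow> bool" where
  "accepts A w \<longleftrightarrow> (\<exists>R E. is_run A w R E \<and> accepting_run A E)"

definition weak_aba :: "'s aba \<Rightarrow> bool" where
  "weak_aba A \<longleftrightarrow> (\<exists>P r.
     partition_on (states A) P \<and> finite P \<and>
     partial_order_on P r \<and>
     (\<forall>B\<in>P. B \<subseteq> acc A \<or> B \<inter> acc A = {}) \<and>
     (\<forall>B\<in>P. \<forall>B'\<in>P. \<forall>q\<in>B. \<forall>q'\<in>B'. \<forall>\<sigma>.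
         q' \<in> pbf_atoms (trans A q \<sigma>) \<longrightarrow> (B', B) \<in> r))"

end

theory Submission
  imports Defs "HOL-Library.Infinite_Set"
begin


lemma suffix_comp_0[simp]: "suffix_comp i \<pi> 0 = \<pi> i"
  by (simp add: suffix_comp_def)

lemma suffix_suffix[simp]: "suffix_comp i (suffix_comp j \<pi>) = suffix_comp (j + i) \<pi>"
  by (simp add: suffix_comp_def add.assoc)

definition cc :: "(nat \<Rightarrow> real) \<Rightarrow> (nat \<Rightarrow> real) \<Rightarrow> nat \<Rightarrow> real" where
  "cc a b i = min (a i) (min_pre b i)"

definition W :: "(nat \<Rightarrow> real) \<Rightarrow> (nat \<Rightarrow> real) \<Rightarrow> real" where
  "W a b = (SUP i. cc a b i)"

definition bnd :: "(nat \<Rightarrow> real) \<Rightarrow> bool" where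
  "bnd a \<longleftrightarrow> (\<forall>i. 0 \<le> a i \<and> a i \<le> 1)"

lemma mp_le1: "min_pre b i \<le> 1"
  unfolding min_pre_def by (rule Min_le) auto

lemma mp_ge0: "bnd b \<Longrightarrow> 0 \<le> min_pre b i"
  unfolding min_pre_def bnd_def by (subst Min_ge_iff) auto

lemma mp_gt: "t < min_pre b i \<longleftrightarrow> t < 1 \<and> (\<forall>j<i. t < b j)"
  unfolding min_pre_def by (subst Min_gr_iff) auto

lemma mp_0[simp]: "min_pre b 0 = 1"
  unfolding min_pre_def by simp

lemma mp_Suc: "min_pre b (Suc i) = min (b 0) (min_pre (\<lambda>j. b (Suc j)) i)"
proof -
  have "insert 1 (b ` {..<Suc i}) = insert (b 0) (insert 1 ((\<lambda>j. b (Suc j)) ` {..<i}))"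
    by (auto simp: lessThan_Suc_eq_insert_0)
  thus ?thesis unfolding min_pre_def by (simp add: Min_insert)
qed

lemma mp_in: "min_pre b i \<in> insert 1 (range b)"
proof -
  have "Min (insert 1 (b ` {..<i})) \<in> insert 1 (b ` {..<i})" by (rule Min_in) auto
  thus ?thesis unfolding min_pre_def by auto
qed

lemma cc_0: "cc a b 0 = min (a 0) 1" by (simp add: cc_def)

lemma cc_Suc: "cc a b (Suc i) = min (b 0) (cc (\<lambda>j. a (Suc j)) (\<lambda>j. b (Suc j)) i)"
  by (simp add: cc_def mp_Suc min.left_commute)

lemma cc_le_a: "cc a b i \<le> a i" by (simp add: cc_def)

lemma cc_bnd: "bnd a \<Longrightarrow> bnd b \<Longrightarrow> 0 \<le> cc a b i \<and> cc a b i \<le> 1"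
  using mp_ge0[of b i] mp_le1[of b i] by (auto simp: cc_def bnd_def)

lemma cc_gt: "t < cc a b i \<longleftrightarrow> t < a i \<and> t < 1 \<and> (\<forall>j<i. t < b j)"
  by (simp add: cc_def mp_gt)

lemma bdd_cc: "bnd a \<Longrightarrow> bnd b \<Longrightarrow> bdd_above (range (cc a b))"
  using cc_bnd by (auto intro!: bdd_aboveI[of _ 1])

lemma cc_le_W: "bnd a \<Longrightarrow> bnd b \<Longrightarrow> cc a b i \<le> W a b"
  unfolding W_def by (rule cSUP_upper) (auto simp: bdd_cc)

lemma W_le: "(\<And>i. cc a b i \<le> s) \<Longrightarrow> W a b \<le> s"
  unfolding W_def by (rule cSUP_least) auto

lemma W_bnd: "bnd a \<Longrightarrow> bnd b \<Longrightarrow> 0 \<le> W a b \<and> W a b \<le> 1"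
proof -
  assume ab: "bnd a" "bnd b"
  have "0 \<le> cc a b 0" using cc_bnd[OF ab] by blast
  also have "cc a b 0 \<le> W a b" by (rule cc_le_W[OF ab])
  finally have "0 \<le> W a b" .
  moreover have "W a b \<le> 1" using W_le[of a b 1] cc_bnd[OF ab] by blast
  ultimately show ?thesis by simp
qed

lemma W_gt: "bnd a \<Longrightarrow> bnd b \<Longrightarrow> t < W a b \<longleftrightarrow> (\<exists>i. t < cc a b i)"
  unfolding W_def by (subst less_cSUP_iff) (auto simp: bdd_cc)

lemma bnd_Suc: "bnd a \<Longrightarrow> bnd (\<lambda>j. a (Suc j))" by (simp add: bnd_def)

lemma W_gt_unfold:
  assumes "bnd a" "bnd b" "t < W a b"
  shows "t < a 0 \<or> (t < b 0 \<and> t < W (\<lambda>j. a (Suc j)) (\<lambda>j. b (Suc j)) \<and>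
      (LEAST i. t < cc (\<lambda>j. a (Suc j)) (\<lambda>j. b (Suc j)) i) < (LEAST i. t < cc a b i))"
proof (cases "t < a 0")
  case False
  from assms obtain i where i: "t < cc a b i" by (auto simp: W_gt)
  have n0: "\<not> t < cc a b 0" using False by (simp add: cc_0)
  then obtain k where k: "i = Suc k" using i by (cases i) auto
  have b0: "t < b 0" and ck: "t < cc (\<lambda>j. a (Suc j)) (\<lambda>j. b (Suc j)) k" using i k by (auto simp: cc_Suc)
  have W': "t < W (\<lambda>j. a (Suc j)) (\<lambda>j. b (Suc j))" using ck assms
    by (auto simp: W_gt bnd_Suc)
  have "(LEAST i. t < cc a b i) = Suc (LEAST i. t < cc a b (Suc i))"
    by (rule Least_Suc[OF i n0])
  also have "(\<lambda>i. t < cc a b (Suc i)) = (\<lambda>i. t < cc (\<lambda>j. a (Suc j)) (\<lambda>j. b (Suc j)) i)"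
    using b0 by (auto simp: cc_Suc)
  finally show ?thesis using b0 W' by auto
qed simp

lemma W_ngt_unfold:
  assumes "bnd a" "bnd b" "\<not> t < W a b"
  shows "\<not> t < a 0 \<and> (\<not> t < b 0 \<or> \<not> t < W (\<lambda>j. a (Suc j)) (\<lambda>j. b (Suc j)))"
proof -
  have "\<not> t < a 0"
  proof
    assume "t < a 0"
    hence "t < cc a b 0" using assms(1) by (auto simp: cc_0 bnd_def)
    thus False using assms by (auto simp: W_gt)
  qed
  moreover have "\<not> (t < b 0 \<and> t < W (\<lambda>j. a (Suc j)) (\<lambda>j. b (Suc j)))"
  proof
    assume "t < b 0 \<and> t < W (\<lambda>j. a (Suc j)) (\<lambda>j. b (Suc j))"
    then obtain k where "t < b 0" "t < cc (\<lambda>j. a (Suc j)) (\<lambda>j. b (Suc j)) k"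
      using assms by (auto simp: W_gt bnd_Suc)
    hence "t < cc a b (Suc k)" by (simp add: cc_Suc)
    thus False using assms by (auto simp: W_gt)
  qed
  ultimately show ?thesis by auto
qed

lemma W_lt_unfold:
  assumes "bnd a" "bnd b" "W a b < t"
  shows "a 0 < t \<and> (b 0 < t \<or> W (\<lambda>j. a (Suc j)) (\<lambda>j. b (Suc j)) < t)"
proof -
  have "cc a b 0 < t" using cc_le_W[OF assms(1,2)] assms(3) by (meson le_less_trans)
  hence a0: "a 0 < t" using assms(1) by (auto simp: cc_0 bnd_def)
  have "b 0 < t \<or> W (\<lambda>j. a (Suc j)) (\<lambda>j. b (Suc j)) < t"
  proof (rule ccontr)
    assume "\<not> ?thesis"
    hence b0: "t \<le> b 0" and W': "t \<le> W (\<lambda>j. a (Suc j)) (\<lambda>j. b (Suc j))" by auto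
    hence "W a b < W (\<lambda>j. a (Suc j)) (\<lambda>j. b (Suc j))" using assms(3) by auto
    then obtain k where k: "W a b < cc (\<lambda>j. a (Suc j)) (\<lambda>j. b (Suc j)) k"
      using assms by (auto simp: W_gt bnd_Suc)
    have "W a b < cc a b (Suc k)" using k b0 assms(3) by (simp add: cc_Suc)
    thus False using cc_le_W[OF assms(1,2)] by (meson not_le)
  qed
  thus ?thesis using a0 by auto
qed

lemma W_attained:
  assumes "finite (range (cc a b))"
  shows "\<exists>i. W a b = cc a b i"
proof -
  have "W a b = Max (range (cc a b))" unfolding W_def
    using assms by (simp add: cSup_eq_Max)
  moreover have "Max (range (cc a b)) \<in> range (cc a b)" using assms by (intro Max_in) auto
  ultimately show ?thesis by auto
qed

lemma W_nlt_unfold: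
  assumes "bnd a" "bnd b" "finite (range (cc a b))" "\<not> W a b < t" "a 0 < t"
  shows "\<not> b 0 < t \<and> \<not> W (\<lambda>j. a (Suc j)) (\<lambda>j. b (Suc j)) < t \<and>
      (LEAST i. \<not> cc (\<lambda>j. a (Suc j)) (\<lambda>j. b (Suc j)) i < t) < (LEAST i. \<not> cc a b i < t)"
proof -
  obtain i where i: "W a b = cc a b i" using W_attained[OF assms(3)] by auto
  hence ci: "\<not> cc a b i < t" using assms(4) by simp
  have n0: "\<not> \<not> cc a b 0 < t" using assms(5) by (simp add: cc_0)
  then obtain k where k: "i = Suc k" using ci by (cases i) auto
  have b0: "\<not> b 0 < t" and ck: "\<not> cc (\<lambda>j. a (Suc j)) (\<lambda>j. b (Suc j)) k < t"
    using ci k by (auto simp: cc_Suc)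
  have W': "\<not> W (\<lambda>j. a (Suc j)) (\<lambda>j. b (Suc j)) < t"
    using ck cc_le_W[OF bnd_Suc[OF assms(1)] bnd_Suc[OF assms(2)], of k] by auto
  have "(LEAST i. \<not> cc a b i < t) = Suc (LEAST i. \<not> cc a b (Suc i) < t)"
    by (rule Least_Suc[OF ci n0])
  also have "(\<lambda>i. \<not> cc a b (Suc i) < t) = (\<lambda>i. \<not> cc (\<lambda>j. a (Suc j)) (\<lambda>j. b (Suc j)) i < t)"
    using b0 by (auto simp: cc_Suc)
  finally show ?thesis using b0 W' by auto
qed

lemma disc_pos: "discounting \<eta> \<Longrightarrow> 0 < \<eta> i"
proof -
  assume d: "discounting \<eta>"
  hence "\<eta> (Suc i) < \<eta> i" "0 \<le> \<eta> (Suc i)" by (auto simp: discounting_def)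
  thus ?thesis by linarith
qed

lemma disc_mono: "discounting \<eta> \<Longrightarrow> i \<le> j \<Longrightarrow> \<eta> j \<le> \<eta> i"
proof (cases "i = j")
  case False
  assume "discounting \<eta>" "i \<le> j"
  hence "i < j" using False by simp
  thus ?thesis using \<open>discounting \<eta>\<close> unfolding discounting_def by (simp add: less_imp_le)
qed simp

lemma disc_ex: "discounting \<eta> \<Longrightarrow> 0 < t \<Longrightarrow> \<exists>N. \<eta> N < t"
proof -
  assume "discounting \<eta>" "0 < t"
  hence "\<eta> \<longlonglongrightarrow> 0" by (simp add: discounting_def)
  hence "eventually (\<lambda>n. \<eta> n < t) sequentially" using \<open>0 < t\<close> by (rule order_tendstoD)
  thus ?thesis by (auto simp: eventually_sequentially)
qed

lemma W_tail:
  assumes "bnd a" "bnd b" "discounting \<eta>" "0 < t" "\<And>i. a i \<le> \<eta> i"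
  shows "W a b < t \<longleftrightarrow> (\<forall>i. cc a b i < t)"
proof
  assume "W a b < t" thus "\<forall>i. cc a b i < t" using cc_le_W[OF assms(1,2)] le_less_trans by blast
next
  assume all: "\<forall>i. cc a b i < t"
  obtain N where N: "\<eta> N < t" using disc_ex[OF assms(3,4)] by auto
  define M where "M = Max (insert (\<eta> N) (cc a b ` {..<N}))"
  have M: "M < t" unfolding M_def using N all by (subst Max_less_iff) auto
  have "W a b \<le> M"
  proof (rule W_le)
    fix i show "cc a b i \<le> M"
    proof (cases "i < N")
      case True thus ?thesis unfolding M_def by (intro Max_ge) auto
    next
      case False
      hence "cc a b i \<le> \<eta> N" using cc_le_a[of a b i] assms(5)[of i] disc_mono[OF assms(3), of N i] by auto
      also have "\<eta> N \<le> M" unfolding M_def by (intro Max_ge) auto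
      finally show ?thesis .
    qed
  qed
  thus "W a b < t" using M by auto
qed



definition dwf :: "'ap ltld \<Rightarrow> bool" where
  "dwf \<psi> \<longleftrightarrow> (\<forall>\<eta>\<in>discs \<psi>. discounting \<eta>)"

definition vs :: "'ap comp \<Rightarrow> 'ap ltld \<Rightarrow> nat \<Rightarrow> real" where
  "vs \<pi> \<psi> = (\<lambda>i. val (suffix_comp i \<pi>) \<psi>)"

definition dv :: "(nat \<Rightarrow> real) \<Rightarrow> 'ap comp \<Rightarrow> 'ap ltld \<Rightarrow> nat \<Rightarrow> real" where
  "dv \<eta> \<pi> \<psi> = (\<lambda>i. \<eta> i * val (suffix_comp i \<pi>) \<psi>)"

definition shift :: "(nat \<Rightarrow> real) \<Rightarrow> nat \<Rightarrow> real" where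
  "shift \<eta> i = \<eta> (Suc i)"

lemma suffix_comp_00[simp]: "suffix_comp 0 \<pi> = \<pi>" by (simp add: suffix_comp_def)

lemma val_U: "val \<pi> (Until f g) = W (vs \<pi> g) (vs \<pi> f)"
  by (simp add: W_def cc_def vs_def)

lemma val_DU: "val \<pi> (DUntil f \<eta> g) = W (dv \<eta> \<pi> g) (dv \<eta> \<pi> f)"
  by (simp add: W_def cc_def dv_def)

lemma vs_0[simp]: "vs \<pi> \<psi> 0 = val \<pi> \<psi>" by (simp add: vs_def)
lemma dv_0[simp]: "dv \<eta> \<pi> \<psi> 0 = \<eta> 0 * val \<pi> \<psi>" by (simp add: dv_def)
lemma vs_shift[simp]: "(\<lambda>j. vs \<pi> \<psi> (Suc j)) = vs (suffix_comp 1 \<pi>) \<psi>"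
  by (simp add: vs_def)
lemma dv_shift[simp]: "(\<lambda>j. dv \<eta> \<pi> \<psi> (Suc j)) = dv (shift \<eta>) (suffix_comp 1 \<pi>) \<psi>"
  by (simp add: dv_def shift_def)

lemma disc_shift: "discounting \<eta> \<Longrightarrow> discounting (shift \<eta>)"
proof -
  assume d: "discounting \<eta>"
  have "(\<lambda>i. \<eta> (Suc i)) \<longlonglongrightarrow> 0" using d unfolding discounting_def
    by (simp add: LIMSEQ_Suc)
  thus ?thesis using d unfolding discounting_def shift_def by auto
qed

lemma dwf_simps[simp]:
  "dwf LTrue" "dwf (Prop p)" "dwf (Neg f) = dwf f" "dwf (Or f g) = (dwf f \<and> dwf g)"
  "dwf (Next f) = dwf f" "dwf (Until f g) = (dwf f \<and> dwf g)"
  "dwf (DUntil f \<eta> g) = (discounting \<eta> \<and> dwf f \<and> dwf g)"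
  by (auto simp: dwf_def)

declare val.simps(6,7)[simp del]

lemma bnd_dv: "discounting \<eta> \<Longrightarrow> (\<And>\<pi>. 0 \<le> val \<pi> \<psi> \<and> val \<pi> \<psi> \<le> 1) \<Longrightarrow> bnd (dv \<eta> \<pi> \<psi>)"
  unfolding bnd_def dv_def discounting_def by (auto simp: mult_le_one)

lemma bnd_vs: "(\<And>\<pi>. 0 \<le> val \<pi> \<psi> \<and> val \<pi> \<psi> \<le> 1) \<Longrightarrow> bnd (vs \<pi> \<psi>)"
  unfolding bnd_def vs_def by auto

lemma val_bnd: "dwf \<psi> \<Longrightarrow> 0 \<le> val \<pi> \<psi> \<and> val \<pi> \<psi> \<le> 1"
proof (induction \<psi> arbitrary: \<pi>)
  case (Until f g)
  hence "bnd (vs \<pi> g)" "bnd (vs \<pi> f)" by (auto intro!: bnd_vs)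
  thus ?case using W_bnd by (simp add: val_U)
next
  case (DUntil f \<eta> g)
  hence "bnd (dv \<eta> \<pi> g)" "bnd (dv \<eta> \<pi> f)" by (auto intro!: bnd_dv)
  thus ?case using W_bnd by (simp add: val_DU)
qed (auto simp: max_def)

lemma bnd_vs': "dwf \<psi> \<Longrightarrow> bnd (vs \<pi> \<psi>)" by (rule bnd_vs) (rule val_bnd)
lemma bnd_dv': "discounting \<eta> \<Longrightarrow> dwf \<psi> \<Longrightarrow> bnd (dv \<eta> \<pi> \<psi>)" using bnd_dv val_bnd by blast



datatype mode = Gt | Lt

fun tr :: "'ap ltld \<Rightarrow> mode \<Rightarrow> real \<Rightarrow> 'ap set \<Rightarrow> ('ap ltld \<times> mode \<times> real) pbf" where
  "tr LTrue Gt t \<sigma> = (if t < 1 then PTrue else PFalse)"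
| "tr LTrue Lt t \<sigma> = (if 1 < t then PTrue else PFalse)"
| "tr (Prop p) Gt t \<sigma> = (if t < (if p \<in> \<sigma> then 1 else 0) then PTrue else PFalse)"
| "tr (Prop p) Lt t \<sigma> = (if (if p \<in> \<sigma> then 1 else 0) < t then PTrue else PFalse)"
| "tr (Neg f) Gt t \<sigma> = tr f Lt (1 - t) \<sigma>"
| "tr (Neg f) Lt t \<sigma> = tr f Gt (1 - t) \<sigma>"
| "tr (Or f g) Gt t \<sigma> = POr (tr f Gt t \<sigma>) (tr g Gt t \<sigma>)"
| "tr (Or f g) Lt t \<sigma> = PAnd (tr f Lt t \<sigma>) (tr g Lt t \<sigma>)"
| "tr (Next f) m t \<sigma> = PVar (f, m, t)"
| "tr (Until f g) Gt t \<sigma> = POr (tr g Gt t \<sigma>) (PAnd (tr f Gt t \<sigma>) (PVar (Until f g, Gt, t)))"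
| "tr (Until f g) Lt t \<sigma> = PAnd (tr g Lt t \<sigma>) (POr (tr f Lt t \<sigma>) (PVar (Until f g, Lt, t)))"
| "tr (DUntil f \<eta> g) Gt t \<sigma> = (if t < 0 then PTrue else if t = 0 then
      POr (tr g Gt 0 \<sigma>) (PAnd (tr f Gt 0 \<sigma>) (PVar (Until f g, Gt, 0)))
    else if \<eta> 0 \<le> t then PFalse else
      POr (tr g Gt (t / \<eta> 0) \<sigma>) (PAnd (tr f Gt (t / \<eta> 0) \<sigma>) (PVar (DUntil f (shift \<eta>) g, Gt, t))))"
| "tr (DUntil f \<eta> g) Lt t \<sigma> = (if t \<le> 0 then PFalse else if \<eta> 0 < t then PTrue else
      PAnd (tr g Lt (t / \<eta> 0) \<sigma>) (POr (tr f Lt (t / \<eta> 0) \<sigma>) (PVar (DUntil f (shift \<eta>) g, Lt, t))))"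

fun Sem :: "'ap ltld \<times> mode \<times> real \<Rightarrow> 'ap comp \<Rightarrow> bool" where
  "Sem (\<psi>, Gt, t) \<pi> = (t < val \<pi> \<psi>)"
| "Sem (\<psi>, Lt, t) \<pi> = (val \<pi> \<psi> < t)"

fun isU :: "'ap ltld \<Rightarrow> bool" where
  "isU (Until f g) = True"
| "isU _ = False"

fun isUG :: "'ap ltld \<times> mode \<times> real \<Rightarrow> bool" where
  "isUG (\<psi>, m, t) = (isU \<psi> \<and> m = Gt)"

fun isUL :: "'ap ltld \<times> mode \<times> real \<Rightarrow> bool" where
  "isUL (\<psi>, m, t) = (isU \<psi> \<and> m = Lt)"

fun rk :: "'ap ltld \<times> mode \<times> real \<Rightarrow> 'ap comp \<Rightarrow> nat" where
  "rk (Until f g, Gt, t) \<pi> = (LEAST i. t < cc (vs \<pi> g) (vs \<pi> f) i)"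
| "rk (Until f g, Lt, t) \<pi> = (LEAST i. \<not> cc (vs \<pi> g) (vs \<pi> f) i < t)"
| "rk q \<pi> = 0"

definition GoodA where
  "GoodA q \<pi> = {q'. Sem q' (suffix_comp 1 \<pi>) \<and> (q' = q \<and> isUG q \<longrightarrow> rk q (suffix_comp 1 \<pi>) < rk q \<pi>)}"

definition BadB where
  "BadB q \<pi> = {q'. \<not> Sem q' (suffix_comp 1 \<pi>) \<and> (q' = q \<and> isUL q \<longrightarrow> rk q (suffix_comp 1 \<pi>) < rk q \<pi>)}"

lemma pbf_mono_atoms:
  "pbf_sat X \<phi> \<Longrightarrow> (\<And>q. q \<in> pbf_atoms \<phi> \<Longrightarrow> q \<in> X \<Longrightarrow> q \<in> Y) \<Longrightarrow> pbf_sat Y \<phi>"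
  by (induction \<phi>) auto

lemma atoms_size: "q' \<in> pbf_atoms (tr \<psi> m t \<sigma>) \<Longrightarrow> size (fst q') \<le> size \<psi>"
  by (induction \<psi> m t \<sigma> rule: tr.induct) (auto split: if_splits)

lemma GoodA_tr:
  assumes "pbf_sat (GoodA q \<pi>) (tr f m t \<sigma>)" "size f < size (fst q')"
  shows "pbf_sat (GoodA q' \<pi>) (tr f m t \<sigma>)"
  using assms(1)
proof (rule pbf_mono_atoms)
  fix x assume "x \<in> pbf_atoms (tr f m t \<sigma>)" "x \<in> GoodA q \<pi>"
  moreover hence "x \<noteq> q'" using atoms_size[of x f m t \<sigma>] assms(2) by auto
  ultimately show "x \<in> GoodA q' \<pi>" by (auto simp: GoodA_def)
qed

lemma BadB_tr:
  assumes "\<not> pbf_sat (UNIV - BadB q \<pi>) (tr f m t \<sigma>)" "size f < size (fst q')"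
  shows "\<not> pbf_sat (UNIV - BadB q' \<pi>) (tr f m t \<sigma>)"
proof
  assume "pbf_sat (UNIV - BadB q' \<pi>) (tr f m t \<sigma>)"
  hence "pbf_sat (UNIV - BadB q \<pi>) (tr f m t \<sigma>)"
  proof (rule pbf_mono_atoms)
    fix x assume "x \<in> pbf_atoms (tr f m t \<sigma>)" "x \<in> UNIV - BadB q' \<pi>"
    moreover hence "x \<noteq> q'" using atoms_size[of x f m t \<sigma>] assms(2) by auto
    ultimately show "x \<in> UNIV - BadB q \<pi>" by (auto simp: BadB_def)
  qed
  thus False using assms(1) by simp
qed

lemma dv_le: "discounting \<eta> \<Longrightarrow> dwf \<psi> \<Longrightarrow> dv \<eta> \<pi> \<psi> i \<le> \<eta> i"
  using val_bnd[of \<psi> "suffix_comp i \<pi>"] by (auto simp: dv_def discounting_def intro: mult_left_le)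

lemma W_le_eta0:
  assumes "discounting \<eta>" "dwf \<psi>" shows "W (dv \<eta> \<pi> \<psi>) b \<le> \<eta> 0"
proof (rule W_le)
  fix i have "cc (dv \<eta> \<pi> \<psi>) b i \<le> dv \<eta> \<pi> \<psi> i" by (rule cc_le_a)
  also have "\<dots> \<le> \<eta> i" by (rule dv_le[OF assms])
  also have "\<dots> \<le> \<eta> 0" using disc_mono[OF assms(1)] by auto
  finally show "cc (dv \<eta> \<pi> \<psi>) b i \<le> \<eta> 0" .
qed

lemma DU_pos:
  assumes "discounting \<eta>" "dwf f" "dwf g"
  shows "0 < W (dv \<eta> \<pi> g) (dv \<eta> \<pi> f) \<longleftrightarrow> 0 < W (vs \<pi> g) (vs \<pi> f)"
proof -
  have p: "\<And>i. 0 < \<eta> i" using disc_pos[OF assms(1)] by auto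
  have "0 < W (dv \<eta> \<pi> g) (dv \<eta> \<pi> f) \<longleftrightarrow> (\<exists>i. 0 < cc (dv \<eta> \<pi> g) (dv \<eta> \<pi> f) i)"
    using assms by (simp add: W_gt bnd_dv')
  also have "\<dots> \<longleftrightarrow> (\<exists>i. 0 < cc (vs \<pi> g) (vs \<pi> f) i)"
    using p by (simp add: cc_gt dv_def vs_def zero_less_mult_iff) (meson less_asym)
  also have "\<dots> \<longleftrightarrow> 0 < W (vs \<pi> g) (vs \<pi> f)"
    using assms by (simp add: W_gt bnd_vs')
  finally show ?thesis .
qed

lemma W_tail_unfold:
  assumes "bnd a" "bnd b" "discounting \<eta>" "0 < t" "\<And>i. a i \<le> \<eta> i"
  shows "W a b < t \<longleftrightarrow> a 0 < t \<and> (b 0 < t \<or> W (\<lambda>j. a (Suc j)) (\<lambda>j. b (Suc j)) < t)"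
proof
  assume "W a b < t" thus "a 0 < t \<and> (b 0 < t \<or> W (\<lambda>j. a (Suc j)) (\<lambda>j. b (Suc j)) < t)"
    using W_lt_unfold[OF assms(1,2)] by blast
next
  assume h: "a 0 < t \<and> (b 0 < t \<or> W (\<lambda>j. a (Suc j)) (\<lambda>j. b (Suc j)) < t)"
  have t2: "W (\<lambda>j. a (Suc j)) (\<lambda>j. b (Suc j)) < t \<longleftrightarrow> (\<forall>i. cc (\<lambda>j. a (Suc j)) (\<lambda>j. b (Suc j)) i < t)"
    by (rule W_tail[OF bnd_Suc[OF assms(1)] bnd_Suc[OF assms(2)] disc_shift[OF assms(3)] assms(4)])
      (simp add: shift_def assms(5))
  have "\<forall>i. cc a b i < t"
  proof
    fix i show "cc a b i < t"
    proof (cases i)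
      case 0 thus ?thesis using h by (simp add: cc_0 min_less_iff_disj)
    next
      case (Suc k) thus ?thesis using h t2 by (auto simp: cc_Suc min_less_iff_disj)
    qed
  qed
  thus "W a b < t" using W_tail[OF assms] by simp
qed



lemma lemA:
  "dwf \<psi> \<Longrightarrow> Sem (\<psi>, m, t) \<pi> \<Longrightarrow> pbf_sat (GoodA (\<psi>, m, t) \<pi>) (tr \<psi> m t (\<pi> 0))"
proof (induction \<psi> arbitrary: m t)
  case LTrue thus ?case by (cases m) auto
next
  case (Prop p) thus ?case by (cases m) auto
next
  case (Neg f)
  show ?case
  proof (cases m)
    case Gt
    hence "pbf_sat (GoodA (f, Lt, 1 - t) \<pi>) (tr f Lt (1 - t) (\<pi> 0))"
      using Neg by (intro Neg.IH) auto
    hence "pbf_sat (GoodA (Neg f, m, t) \<pi>) (tr f Lt (1 - t) (\<pi> 0))" by (rule GoodA_tr) simp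
    thus ?thesis using Gt by simp
  next
    case Lt
    hence "pbf_sat (GoodA (f, Gt, 1 - t) \<pi>) (tr f Gt (1 - t) (\<pi> 0))"
      using Neg by (intro Neg.IH) auto
    hence "pbf_sat (GoodA (Neg f, m, t) \<pi>) (tr f Gt (1 - t) (\<pi> 0))" by (rule GoodA_tr) simp
    thus ?thesis using Lt by simp
  qed
next
  case (Or f g)
  have f: "Sem (f, m', t') \<pi> \<Longrightarrow> pbf_sat (GoodA (Or f g, m, t) \<pi>) (tr f m' t' (\<pi> 0))" for m' t'
    using Or.IH(1)[of m' t'] Or.prems by (auto intro: GoodA_tr)
  have g: "Sem (g, m', t') \<pi> \<Longrightarrow> pbf_sat (GoodA (Or f g, m, t) \<pi>) (tr g m' t' (\<pi> 0))" for m' t'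
    using Or.IH(2)[of m' t'] Or.prems by (auto intro: GoodA_tr)
  show ?case using Or.prems f g by (cases m) (auto simp: less_max_iff_disj)
next
  case (Next f)
  thus ?case by (cases m) (auto simp: GoodA_def)
next
  case (Until f g)
  have f: "Sem (f, m', t') \<pi> \<Longrightarrow> pbf_sat (GoodA (Until f g, m, t) \<pi>) (tr f m' t' (\<pi> 0))" for m' t'
    using Until.IH(1)[of m' t'] Until.prems by (auto intro: GoodA_tr)
  have g: "Sem (g, m', t') \<pi> \<Longrightarrow> pbf_sat (GoodA (Until f g, m, t) \<pi>) (tr g m' t' (\<pi> 0))" for m' t'
    using Until.IH(2)[of m' t'] Until.prems by (auto intro: GoodA_tr)
  have bg: "bnd (vs \<pi> g)" and bf: "bnd (vs \<pi> f)" using Until.prems by (auto intro: bnd_vs')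
  show ?case
  proof (cases m)
    case Gt
    hence s: "t < W (vs \<pi> g) (vs \<pi> f)" using Until.prems by (simp add: val_U)
    from W_gt_unfold[OF bg bf s] show ?thesis
    proof
      assume "t < vs \<pi> g 0" thus ?thesis using g[of Gt t] Gt by simp
    next
      assume h: "t < vs \<pi> f 0 \<and> t < W (\<lambda>j. vs \<pi> g (Suc j)) (\<lambda>j. vs \<pi> f (Suc j)) \<and>
        (LEAST i. t < cc (\<lambda>j. vs \<pi> g (Suc j)) (\<lambda>j. vs \<pi> f (Suc j)) i) < (LEAST i. t < cc (vs \<pi> g) (vs \<pi> f) i)"
      have "(Until f g, Gt, t) \<in> GoodA (Until f g, m, t) \<pi>" using h Gt by (simp add: GoodA_def val_U)
      thus ?thesis using f[of Gt t] h Gt by simp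
    qed
  next
    case Lt
    hence s: "W (vs \<pi> g) (vs \<pi> f) < t" using Until.prems by (simp add: val_U)
    from W_lt_unfold[OF bg bf s]
    have h: "val \<pi> g < t" "val \<pi> f < t \<or> W (vs (suffix_comp 1 \<pi>) g) (vs (suffix_comp 1 \<pi>) f) < t" by auto
    have "val \<pi> f < t \<or> (Until f g, Lt, t) \<in> GoodA (Until f g, m, t) \<pi>" using h Lt by (auto simp: GoodA_def val_U)
    thus ?thesis using f[of Lt t] g[of Lt t] h Lt by auto
  qed
next
  case (DUntil f \<eta> g)
  have f: "Sem (f, m', t') \<pi> \<Longrightarrow> pbf_sat (GoodA (DUntil f \<eta> g, m, t) \<pi>) (tr f m' t' (\<pi> 0))" for m' t'
    using DUntil.IH(1)[of m' t'] DUntil.prems by (auto intro: GoodA_tr)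
  have g: "Sem (g, m', t') \<pi> \<Longrightarrow> pbf_sat (GoodA (DUntil f \<eta> g, m, t) \<pi>) (tr g m' t' (\<pi> 0))" for m' t'
    using DUntil.IH(2)[of m' t'] DUntil.prems by (auto intro: GoodA_tr)
  have d: "discounting \<eta>" and df: "dwf f" and dg: "dwf g" using DUntil.prems by auto
  have bg: "bnd (dv \<eta> \<pi> g)" and bf: "bnd (dv \<eta> \<pi> f)" using d df dg by (auto intro: bnd_dv')
  have e0: "0 < \<eta> 0" by (rule disc_pos[OF d])
  show ?case
  proof (cases m)
    case Gt
    hence s: "t < W (dv \<eta> \<pi> g) (dv \<eta> \<pi> f)" using DUntil.prems by (simp add: val_DU)
    consider "t < 0" | "t = 0" | "0 < t" "\<eta> 0 \<le> t" | "0 < t" "t < \<eta> 0" by fastforce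
    thus ?thesis
    proof cases
      case 1 thus ?thesis using Gt by simp
    next
      case 2
      hence s': "0 < W (vs \<pi> g) (vs \<pi> f)" using s DU_pos[OF d df dg] by simp
      have u: "0 < vs \<pi> g 0 \<or> (0 < vs \<pi> f 0 \<and> 0 < W (\<lambda>j. vs \<pi> g (Suc j)) (\<lambda>j. vs \<pi> f (Suc j)))"
        using W_gt_unfold[OF bnd_vs'[OF dg] bnd_vs'[OF df] s'] by blast
      show ?thesis
      proof (cases "0 < vs \<pi> g 0")
        case True thus ?thesis using g[of Gt 0] Gt 2 by simp
      next
        case False
        hence h: "0 < vs \<pi> f 0" "0 < W (\<lambda>j. vs \<pi> g (Suc j)) (\<lambda>j. vs \<pi> f (Suc j))" using u by auto
        have "(Until f g, Gt, 0) \<in> GoodA (DUntil f \<eta> g, m, t) \<pi>" using h by (simp add: GoodA_def val_U)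
        thus ?thesis using f[of Gt 0] h Gt 2 by simp
      qed
    next
      case 3
      hence "W (dv \<eta> \<pi> g) (dv \<eta> \<pi> f) \<le> t" using W_le_eta0[OF d dg] by (meson order_trans)
      thus ?thesis using s by simp
    next
      case 4
      have u: "t < dv \<eta> \<pi> g 0 \<or> (t < dv \<eta> \<pi> f 0 \<and> t < W (\<lambda>j. dv \<eta> \<pi> g (Suc j)) (\<lambda>j. dv \<eta> \<pi> f (Suc j)))"
        using W_gt_unfold[OF bg bf s] by blast
      show ?thesis
      proof (cases "t < dv \<eta> \<pi> g 0")
        case True
        hence "t / \<eta> 0 < val \<pi> g" using e0 by (simp add: pos_divide_less_eq mult.commute)
        thus ?thesis using g[of Gt "t / \<eta> 0"] Gt 4 by simp
      next
        case False
        hence h: "t < dv \<eta> \<pi> f 0" "t < W (\<lambda>j. dv \<eta> \<pi> g (Suc j)) (\<lambda>j. dv \<eta> \<pi> f (Suc j))" using u by auto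
        hence "t / \<eta> 0 < val \<pi> f" using e0 by (simp add: pos_divide_less_eq mult.commute)
        moreover have "(DUntil f (shift \<eta>) g, Gt, t) \<in> GoodA (DUntil f \<eta> g, m, t) \<pi>"
          using h by (simp add: GoodA_def val_DU)
        ultimately show ?thesis using f[of Gt "t / \<eta> 0"] Gt 4 by simp
      qed
    qed
  next
    case Lt
    hence s: "W (dv \<eta> \<pi> g) (dv \<eta> \<pi> f) < t" using DUntil.prems by (simp add: val_DU)
    have W0: "0 \<le> W (dv \<eta> \<pi> g) (dv \<eta> \<pi> f)" using W_bnd[OF bg bf] by simp
    consider "t \<le> 0" | "0 < t" "\<eta> 0 < t" | "0 < t" "t \<le> \<eta> 0" by fastforce
    thus ?thesis
    proof cases
      case 1 thus ?thesis using s W0 by simp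
    next
      case 2 thus ?thesis using Lt by simp
    next
      case 3
      from W_lt_unfold[OF bg bf s]
      have h: "\<eta> 0 * val \<pi> g < t" "\<eta> 0 * val \<pi> f < t \<or> W (dv (shift \<eta>) (suffix_comp 1 \<pi>) g) (dv (shift \<eta>) (suffix_comp 1 \<pi>) f) < t"
        by auto
      have hg: "val \<pi> g < t / \<eta> 0" using h(1) e0 by (simp add: pos_less_divide_eq mult.commute)
      have "val \<pi> f < t / \<eta> 0 \<or> (DUntil f (shift \<eta>) g, Lt, t) \<in> GoodA (DUntil f \<eta> g, m, t) \<pi>"
        using h(2) e0 by (auto simp: GoodA_def val_DU pos_less_divide_eq mult.commute)
      thus ?thesis using f[of Lt "t / \<eta> 0"] g[of Lt "t / \<eta> 0"] hg Lt 3 by auto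
    qed
  qed
qed



definition fs :: "'ap comp \<Rightarrow> bool" where
  "fs \<pi> \<longleftrightarrow> finite (range (\<lambda>i. suffix_comp i \<pi>))"

lemma fs_suffix: "fs \<pi> \<Longrightarrow> fs (suffix_comp 1 \<pi>)"
  unfolding fs_def by (rule finite_subset[rotated]) auto

lemma fin_vs: "fs \<pi> \<Longrightarrow> finite (range (vs \<pi> \<psi>))"
proof -
  assume "fs \<pi>"
  hence "finite ((\<lambda>s. val s \<psi>) ` range (\<lambda>i. suffix_comp i \<pi>))" unfolding fs_def by simp
  moreover have "range (vs \<pi> \<psi>) = (\<lambda>s. val s \<psi>) ` range (\<lambda>i. suffix_comp i \<pi>)"
    by (auto simp: vs_def)
  ultimately show ?thesis by simp
qed

lemma fin_cc: "finite (range a) \<Longrightarrow> finite (range b) \<Longrightarrow> finite (range (cc a b))"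
proof -
  assume fa: "finite (range a)" and fb: "finite (range b)"
  have "range (min_pre b) \<subseteq> insert 1 (range b)" using mp_in by auto
  hence fm: "finite (range (min_pre b))" using fb by (auto intro: finite_subset)
  have "range (cc a b) \<subseteq> (\<lambda>(x, y). min x y) ` (range a \<times> range (min_pre b))"
    by (auto simp: cc_def)
  thus ?thesis by (rule finite_subset) (use fa fm in auto)
qed

lemma lemB:
  "dwf \<psi> \<Longrightarrow> fs \<pi> \<Longrightarrow> \<not> Sem (\<psi>, m, t) \<pi> \<Longrightarrow> \<not> pbf_sat (UNIV - BadB (\<psi>, m, t) \<pi>) (tr \<psi> m t (\<pi> 0))"
proof (induction \<psi> arbitrary: m t)
  case LTrue thus ?case by (cases m) auto
next
  case (Prop p) thus ?case by (cases m) auto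
next
  case (Neg f)
  show ?case
  proof (cases m)
    case Gt
    hence "\<not> pbf_sat (UNIV - BadB (f, Lt, 1 - t) \<pi>) (tr f Lt (1 - t) (\<pi> 0))"
      using Neg by (intro Neg.IH) auto
    hence "\<not> pbf_sat (UNIV - BadB (Neg f, m, t) \<pi>) (tr f Lt (1 - t) (\<pi> 0))" by (rule BadB_tr) simp
    thus ?thesis using Gt by simp
  next
    case Lt
    hence "\<not> pbf_sat (UNIV - BadB (f, Gt, 1 - t) \<pi>) (tr f Gt (1 - t) (\<pi> 0))"
      using Neg by (intro Neg.IH) auto
    hence "\<not> pbf_sat (UNIV - BadB (Neg f, m, t) \<pi>) (tr f Gt (1 - t) (\<pi> 0))" by (rule BadB_tr) simp
    thus ?thesis using Lt by simp
  qed
next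
  case (Or f g)
  have f: "\<not> Sem (f, m', t') \<pi> \<Longrightarrow> \<not> pbf_sat (UNIV - BadB (Or f g, m, t) \<pi>) (tr f m' t' (\<pi> 0))" for m' t'
  proof -
    assume "\<not> Sem (f, m', t') \<pi>"
    hence "\<not> pbf_sat (UNIV - BadB (f, m', t') \<pi>) (tr f m' t' (\<pi> 0))" using Or.IH(1) Or.prems by auto
    thus ?thesis by (rule BadB_tr) simp
  qed
  have g: "\<not> Sem (g, m', t') \<pi> \<Longrightarrow> \<not> pbf_sat (UNIV - BadB (Or f g, m, t) \<pi>) (tr g m' t' (\<pi> 0))" for m' t'
  proof -
    assume "\<not> Sem (g, m', t') \<pi>"
    hence "\<not> pbf_sat (UNIV - BadB (g, m', t') \<pi>) (tr g m' t' (\<pi> 0))" using Or.IH(2) Or.prems by auto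
    thus ?thesis by (rule BadB_tr) simp
  qed
  show ?case using Or.prems f g by (cases m) (auto simp: less_max_iff_disj)
next
  case (Next f)
  thus ?case by (cases m) (auto simp: BadB_def)
next
  case (Until f g)
  have f: "\<not> Sem (f, m', t') \<pi> \<Longrightarrow> \<not> pbf_sat (UNIV - BadB (Until f g, m, t) \<pi>) (tr f m' t' (\<pi> 0))" for m' t'
  proof -
    assume "\<not> Sem (f, m', t') \<pi>"
    hence "\<not> pbf_sat (UNIV - BadB (f, m', t') \<pi>) (tr f m' t' (\<pi> 0))" using Until.IH(1) Until.prems by auto
    thus ?thesis by (rule BadB_tr) simp
  qed
  have g: "\<not> Sem (g, m', t') \<pi> \<Longrightarrow> \<not> pbf_sat (UNIV - BadB (Until f g, m, t) \<pi>) (tr g m' t' (\<pi> 0))" for m' t'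
  proof -
    assume "\<not> Sem (g, m', t') \<pi>"
    hence "\<not> pbf_sat (UNIV - BadB (g, m', t') \<pi>) (tr g m' t' (\<pi> 0))" using Until.IH(2) Until.prems by auto
    thus ?thesis by (rule BadB_tr) simp
  qed
  have bg: "bnd (vs \<pi> g)" and bf: "bnd (vs \<pi> f)" using Until.prems by (auto intro: bnd_vs')
  show ?case
  proof (cases m)
    case Gt
    hence s: "\<not> t < W (vs \<pi> g) (vs \<pi> f)" using Until.prems by (simp add: val_U)
    from W_ngt_unfold[OF bg bf s]
    have h: "\<not> t < val \<pi> g" "\<not> t < val \<pi> f \<or> \<not> t < W (vs (suffix_comp 1 \<pi>) g) (vs (suffix_comp 1 \<pi>) f)"
      by auto
    have "\<not> t < val \<pi> f \<or> (Until f g, Gt, t) \<in> BadB (Until f g, m, t) \<pi>"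
      using h Gt by (auto simp: BadB_def val_U)
    thus ?thesis using f[of Gt t] g[of Gt t] h Gt by auto
  next
    case Lt
    hence s: "\<not> W (vs \<pi> g) (vs \<pi> f) < t" using Until.prems by (simp add: val_U)
    show ?thesis
    proof (cases "val \<pi> g < t")
      case False thus ?thesis using g[of Lt t] Lt by simp
    next
      case True
      have fin: "finite (range (cc (vs \<pi> g) (vs \<pi> f)))" using Until.prems by (intro fin_cc fin_vs)
      from W_nlt_unfold[OF bg bf fin s] True
      have h: "\<not> val \<pi> f < t" "\<not> W (vs (suffix_comp 1 \<pi>) g) (vs (suffix_comp 1 \<pi>) f) < t"
        "(LEAST i. \<not> cc (vs (suffix_comp 1 \<pi>) g) (vs (suffix_comp 1 \<pi>) f) i < t) < (LEAST i. \<not> cc (vs \<pi> g) (vs \<pi> f) i < t)"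
        by auto
      have "(Until f g, Lt, t) \<in> BadB (Until f g, m, t) \<pi>" using h Lt by (simp add: BadB_def val_U)
      thus ?thesis using f[of Lt t] h Lt by simp
    qed
  qed
next
  case (DUntil f \<eta> g)
  have f: "\<not> Sem (f, m', t') \<pi> \<Longrightarrow> \<not> pbf_sat (UNIV - BadB (DUntil f \<eta> g, m, t) \<pi>) (tr f m' t' (\<pi> 0))" for m' t'
  proof -
    assume "\<not> Sem (f, m', t') \<pi>"
    hence "\<not> pbf_sat (UNIV - BadB (f, m', t') \<pi>) (tr f m' t' (\<pi> 0))" using DUntil.IH(1) DUntil.prems by auto
    thus ?thesis by (rule BadB_tr) simp
  qed
  have g: "\<not> Sem (g, m', t') \<pi> \<Longrightarrow> \<not> pbf_sat (UNIV - BadB (DUntil f \<eta> g, m, t) \<pi>) (tr g m' t' (\<pi> 0))" for m' t'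
  proof -
    assume "\<not> Sem (g, m', t') \<pi>"
    hence "\<not> pbf_sat (UNIV - BadB (g, m', t') \<pi>) (tr g m' t' (\<pi> 0))" using DUntil.IH(2) DUntil.prems by auto
    thus ?thesis by (rule BadB_tr) simp
  qed
  have d: "discounting \<eta>" and df: "dwf f" and dg: "dwf g" using DUntil.prems by auto
  have bg: "bnd (dv \<eta> \<pi> g)" and bf: "bnd (dv \<eta> \<pi> f)" using d df dg by (auto intro: bnd_dv')
  have e0: "0 < \<eta> 0" by (rule disc_pos[OF d])
  have W0: "0 \<le> W (dv \<eta> \<pi> g) (dv \<eta> \<pi> f)" using W_bnd[OF bg bf] by simp
  show ?case
  proof (cases m)
    case Gt
    hence s: "\<not> t < W (dv \<eta> \<pi> g) (dv \<eta> \<pi> f)" using DUntil.prems by (simp add: val_DU)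
    consider "t < 0" | "t = 0" | "0 < t" "\<eta> 0 \<le> t" | "0 < t" "t < \<eta> 0" by fastforce
    thus ?thesis
    proof cases
      case 1 thus ?thesis using s W0 by simp
    next
      case 2
      hence s': "\<not> 0 < W (vs \<pi> g) (vs \<pi> f)" using s DU_pos[OF d df dg] by simp
      from W_ngt_unfold[OF bnd_vs'[OF dg] bnd_vs'[OF df] s']
      have h: "\<not> 0 < val \<pi> g" "\<not> 0 < val \<pi> f \<or> \<not> 0 < W (vs (suffix_comp 1 \<pi>) g) (vs (suffix_comp 1 \<pi>) f)"
        by auto
      have "\<not> 0 < val \<pi> f \<or> (Until f g, Gt, 0) \<in> BadB (DUntil f \<eta> g, m, t) \<pi>"
        using h by (auto simp: BadB_def val_U)
      thus ?thesis using f[of Gt 0] g[of Gt 0] h Gt 2 by auto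
    next
      case 3 thus ?thesis using Gt by simp
    next
      case 4
      from W_ngt_unfold[OF bg bf s]
      have h: "\<not> t < \<eta> 0 * val \<pi> g"
        "\<not> t < \<eta> 0 * val \<pi> f \<or> \<not> t < W (dv (shift \<eta>) (suffix_comp 1 \<pi>) g) (dv (shift \<eta>) (suffix_comp 1 \<pi>) f)"
        by auto
      have hg: "\<not> t / \<eta> 0 < val \<pi> g" using h(1) e0 by (simp add: pos_divide_less_eq mult.commute)
      have "\<not> t / \<eta> 0 < val \<pi> f \<or> (DUntil f (shift \<eta>) g, Gt, t) \<in> BadB (DUntil f \<eta> g, m, t) \<pi>"
        using h(2) e0 by (auto simp: BadB_def val_DU pos_divide_less_eq mult.commute)
      thus ?thesis using f[of Gt "t / \<eta> 0"] g[of Gt "t / \<eta> 0"] hg Gt 4 by auto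
    qed
  next
    case Lt
    hence s: "\<not> W (dv \<eta> \<pi> g) (dv \<eta> \<pi> f) < t" using DUntil.prems by (simp add: val_DU)
    consider "t \<le> 0" | "0 < t" "\<eta> 0 < t" | "0 < t" "t \<le> \<eta> 0" by fastforce
    thus ?thesis
    proof cases
      case 1 thus ?thesis using Lt by simp
    next
      case 2 thus ?thesis using s W_le_eta0[OF d dg, of \<pi> "dv \<eta> \<pi> f"] by simp
    next
      case 3
      have "\<not> (\<eta> 0 * val \<pi> g < t \<and> (\<eta> 0 * val \<pi> f < t \<or> W (dv (shift \<eta>) (suffix_comp 1 \<pi>) g) (dv (shift \<eta>) (suffix_comp 1 \<pi>) f) < t))"
        using s W_tail_unfold[OF bg bf d 3(1) dv_le[OF d dg]] by simp
      hence h: "\<not> val \<pi> g < t / \<eta> 0 \<or> (\<not> val \<pi> f < t / \<eta> 0 \<and> (DUntil f (shift \<eta>) g, Lt, t) \<in> BadB (DUntil f \<eta> g, m, t) \<pi>)"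
        using e0 by (auto simp: BadB_def val_DU pos_less_divide_eq mult.commute)
      thus ?thesis using f[of Lt "t / \<eta> 0"] g[of Lt "t / \<eta> 0"] Lt 3 by auto
    qed
  qed
qed



fun flip :: "mode \<Rightarrow> mode" where "flip Gt = Lt" | "flip Lt = Gt"

definition shiftn :: "nat \<Rightarrow> (nat \<Rightarrow> real) \<Rightarrow> nat \<Rightarrow> real" where
  "shiftn k \<eta> = (\<lambda>i. \<eta> (i + k))"

definition KK :: "(nat \<Rightarrow> real) \<Rightarrow> real \<Rightarrow> nat" where
  "KK \<eta> t = (LEAST k. \<eta> k < t)"

fun C :: "'ap ltld \<Rightarrow> mode \<Rightarrow> real \<Rightarrow> ('ap ltld \<times> mode \<times> real) set" where
  "C LTrue m t = {(LTrue, m, t)}"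
| "C (Prop p) m t = {(Prop p, m, t)}"
| "C (Neg f) m t = insert (Neg f, m, t) (C f (flip m) (1 - t))"
| "C (Or f g) m t = insert (Or f g, m, t) (C f m t \<union> C g m t)"
| "C (Next f) m t = insert (Next f, m, t) (C f m t)"
| "C (Until f g) m t = insert (Until f g, m, t) (C f m t \<union> C g m t)"
| "C (DUntil f \<eta> g) m t = insert (Until f g, m, 0) (C f m 0 \<union> C g m 0 \<union>
     (\<Union>k\<le>KK \<eta> t. insert (DUntil f (shiftn k \<eta>) g, m, t) (C f m (t / \<eta> k) \<union> C g m (t / \<eta> k))))"

definition trq :: "'ap ltld \<times> mode \<times> real \<Rightarrow> 'ap set \<Rightarrow> ('ap ltld \<times> mode \<times> real) pbf" where
  "trq q \<sigma> = (case q of (\<psi>, m, t) \<Rightarrow> tr \<psi> m t \<sigma>)"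

lemma trq_simp[simp]: "trq (\<psi>, m, t) \<sigma> = tr \<psi> m t \<sigma>" by (simp add: trq_def)

lemma shiftn_0[simp]: "shiftn 0 \<eta> = \<eta>" by (simp add: shiftn_def)
lemma shift_shiftn[simp]: "shift (shiftn k \<eta>) = shiftn (Suc k) \<eta>" by (simp add: shift_def shiftn_def fun_eq_iff)
lemma shiftn_at0[simp]: "shiftn k \<eta> 0 = \<eta> k" by (simp add: shiftn_def)

lemma self_in: "(\<psi>, m, t) \<in> C \<psi> m t"
  by (cases \<psi>) force+

lemma finite_C: "finite (C \<psi> m t)"
  by (induction \<psi> arbitrary: m t) auto

lemma disc_shiftn: "discounting \<eta> \<Longrightarrow> discounting (shiftn k \<eta>)"
  unfolding discounting_def shiftn_def by (auto intro: LIMSEQ_ignore_initial_segment)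

lemma dwf_C: "dwf \<psi> \<Longrightarrow> q \<in> C \<psi> m t \<Longrightarrow> dwf (fst q)"
  by (induction \<psi> arbitrary: m t) (auto simp: disc_shiftn)

lemma KK_gt:
  assumes "discounting \<eta>" "0 < t" "\<not> \<eta> k < t" "k \<le> KK \<eta> t"
  shows "k < KK \<eta> t"
proof -
  obtain N where "\<eta> N < t" using disc_ex[OF assms(1,2)] by auto
  hence "\<eta> (KK \<eta> t) < t" unfolding KK_def by (rule LeastI)
  thus ?thesis using assms(3,4) by (cases "k = KK \<eta> t") auto
qed

lemma closure:
  "dwf \<psi> \<Longrightarrow> q \<in> C \<psi> m t \<Longrightarrow> pbf_atoms (trq q \<sigma>) \<subseteq> C \<psi> m t"
proof (induction \<psi> arbitrary: m t q)
  case LTrue thus ?case by (cases m) auto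
next
  case (Prop p) thus ?case by (cases m) auto
next
  case (Neg f)
  have top: "pbf_atoms (tr f m' t' \<sigma>) \<subseteq> C f m' t'" for m' t'
    using Neg.IH[of "(f, m', t')" m' t'] Neg.prems self_in by auto
  show ?case
  proof (cases "q = (Neg f, m, t)")
    case True thus ?thesis using top by (cases m) auto
  next
    case False
    hence "q \<in> C f (flip m) (1 - t)" using Neg.prems by auto
    hence "pbf_atoms (trq q \<sigma>) \<subseteq> C f (flip m) (1 - t)" using Neg.IH Neg.prems by auto
    thus ?thesis by auto
  qed
next
  case (Or f g)
  have tf: "pbf_atoms (tr f m' t' \<sigma>) \<subseteq> C f m' t'" for m' t'
    using Or.IH(1)[of "(f, m', t')" m' t'] Or.prems self_in by auto
  have tg: "pbf_atoms (tr g m' t' \<sigma>) \<subseteq> C g m' t'" for m' t'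
    using Or.IH(2)[of "(g, m', t')" m' t'] Or.prems self_in by auto
  show ?case
  proof (cases "q = (Or f g, m, t)")
    case True thus ?thesis using tf[of m t] tg[of m t] by (cases m) auto
  next
    case False
    hence "q \<in> C f m t \<or> q \<in> C g m t" using Or.prems by auto
    thus ?thesis
    proof
      assume "q \<in> C f m t"
      hence "pbf_atoms (trq q \<sigma>) \<subseteq> C f m t" using Or.IH(1) Or.prems by auto
      thus ?thesis by auto
    next
      assume "q \<in> C g m t"
      hence "pbf_atoms (trq q \<sigma>) \<subseteq> C g m t" using Or.IH(2) Or.prems by auto
      thus ?thesis by auto
    qed
  qed
next
  case (Next f)
  show ?case
  proof (cases "q = (Next f, m, t)")
    case True thus ?thesis using self_in by auto
  next
    case False
    hence "q \<in> C f m t" using Next.prems by auto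
    hence "pbf_atoms (trq q \<sigma>) \<subseteq> C f m t" using Next.IH Next.prems by auto
    thus ?thesis by auto
  qed
next
  case (Until f g)
  have tf: "pbf_atoms (tr f m' t' \<sigma>) \<subseteq> C f m' t'" for m' t'
    using Until.IH(1)[of "(f, m', t')" m' t'] Until.prems self_in by auto
  have tg: "pbf_atoms (tr g m' t' \<sigma>) \<subseteq> C g m' t'" for m' t'
    using Until.IH(2)[of "(g, m', t')" m' t'] Until.prems self_in by auto
  show ?case
  proof (cases "q = (Until f g, m, t)")
    case True thus ?thesis using tf[of m t] tg[of m t] by (cases m) auto
  next
    case False
    hence "q \<in> C f m t \<or> q \<in> C g m t" using Until.prems by auto
    thus ?thesis
    proof
      assume "q \<in> C f m t"
      hence "pbf_atoms (trq q \<sigma>) \<subseteq> C f m t" using Until.IH(1) Until.prems by auto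
      thus ?thesis by auto
    next
      assume "q \<in> C g m t"
      hence "pbf_atoms (trq q \<sigma>) \<subseteq> C g m t" using Until.IH(2) Until.prems by auto
      thus ?thesis by auto
    qed
  qed
next
  case (DUntil f \<eta> g)
  have d: "discounting \<eta>" using DUntil.prems by simp
  have tf: "pbf_atoms (tr f m' t' \<sigma>) \<subseteq> C f m' t'" for m' t'
    using DUntil.IH(1)[of "(f, m', t')" m' t'] DUntil.prems self_in by auto
  have tg: "pbf_atoms (tr g m' t' \<sigma>) \<subseteq> C g m' t'" for m' t'
    using DUntil.IH(2)[of "(g, m', t')" m' t'] DUntil.prems self_in by auto
  have cf: "q' \<in> C f m' t' \<Longrightarrow> pbf_atoms (trq q' \<sigma>) \<subseteq> C f m' t'" for q' m' t'
    using DUntil.IH(1) DUntil.prems by auto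
  have cg: "q' \<in> C g m' t' \<Longrightarrow> pbf_atoms (trq q' \<sigma>) \<subseteq> C g m' t'" for q' m' t'
    using DUntil.IH(2) DUntil.prems by auto
  let ?X = "C (DUntil f \<eta> g) m t"
  have sub1: "C f m 0 \<subseteq> ?X" "C g m 0 \<subseteq> ?X" by auto
  have sub2: "k \<le> KK \<eta> t \<Longrightarrow> C f m (t / \<eta> k) \<subseteq> ?X" "k \<le> KK \<eta> t \<Longrightarrow> C g m (t / \<eta> k) \<subseteq> ?X" for k
    by auto
  have sub3: "k \<le> KK \<eta> t \<Longrightarrow> (DUntil f (shiftn k \<eta>) g, m, t) \<in> ?X" for k by auto
  have U: "pbf_atoms (trq (Until f g, m, 0) \<sigma>) \<subseteq> ?X"
    using tf[of m 0] tg[of m 0] sub1 by (cases m) auto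
  have S: "pbf_atoms (trq (DUntil f (shiftn k \<eta>) g, m, t) \<sigma>) \<subseteq> ?X" if k: "k \<le> KK \<eta> t" for k
  proof (cases m)
    case Gt
    show ?thesis
    proof (cases "t < 0 \<or> (0 < t \<and> \<eta> k \<le> t)")
      case True thus ?thesis using Gt by auto
    next
      case False
      show ?thesis
      proof (cases "t = 0")
        case True thus ?thesis using Gt tf[of Gt 0] tg[of Gt 0] sub1 by auto
      next
        case False2: False
        hence "0 < t" "\<not> \<eta> k < t" using False by auto
        hence "Suc k \<le> KK \<eta> t" using KK_gt[OF d _ _ k] by auto
        thus ?thesis using Gt False False2 tf[of Gt "t / \<eta> k"] tg[of Gt "t / \<eta> k"] sub2[OF k] sub3
          by auto
      qed
    qed
  next
    case Lt
    show ?thesis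
    proof (cases "t \<le> 0 \<or> \<eta> k < t")
      case True thus ?thesis using Lt by auto
    next
      case False
      hence "Suc k \<le> KK \<eta> t" using KK_gt[OF d _ _ k] by auto
      thus ?thesis using Lt False tf[of Lt "t / \<eta> k"] tg[of Lt "t / \<eta> k"] sub2[OF k] sub3
        by auto
    qed
  qed
  show ?case
  proof -
    from DUntil.prems(2) consider "q = (Until f g, m, 0)" | "q \<in> C f m 0" | "q \<in> C g m 0"
      | k where "k \<le> KK \<eta> t" "q = (DUntil f (shiftn k \<eta>) g, m, t)"
      | k where "k \<le> KK \<eta> t" "q \<in> C f m (t / \<eta> k)"
      | k where "k \<le> KK \<eta> t" "q \<in> C g m (t / \<eta> k)"
      by auto
    thus ?thesis
    proof cases
      case 1 thus ?thesis using U by simp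
    next
      case 2 thus ?thesis using cf sub1 by blast
    next
      case 3 thus ?thesis using cg sub1 by blast
    next
      case 4 thus ?thesis using S by simp
    next
      case 5 thus ?thesis using cf sub2 by blast
    next
      case 6 thus ?thesis using cg sub2 by blast
    qed
  qed
qed

fun sr :: "'ap ltld \<times> mode \<times> real \<Rightarrow> nat" where
  "sr (DUntil f \<eta> g, m, t) = (if 0 < t then Suc (Suc (KK \<eta> t)) else 1)"
| "sr q = 0"

definition lexless :: "'ap ltld \<times> mode \<times> real \<Rightarrow> 'ap ltld \<times> mode \<times> real \<Rightarrow> bool" where
  "lexless a b \<longleftrightarrow> size (fst a) < size (fst b) \<or> (size (fst a) = size (fst b) \<and> sr a < sr b)"

lemma lexless_irrefl: "\<not> lexless a a" by (simp add: lexless_def)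
lemma lexless_trans: "lexless a b \<Longrightarrow> lexless b c \<Longrightarrow> lexless a c" by (auto simp: lexless_def)

lemma KK_shift:
  assumes "discounting \<eta>" "0 < t" "\<not> \<eta> 0 < t"
  shows "KK \<eta> t = Suc (KK (shift \<eta>) t)"
proof -
  obtain N where "\<eta> N < t" using disc_ex[OF assms(1,2)] by auto
  thus ?thesis unfolding KK_def shift_def using Least_Suc[of "\<lambda>k. \<eta> k < t" N] assms(3) by simp
qed

lemma atoms_dec:
  assumes "dwf \<psi>" "q' \<in> pbf_atoms (tr \<psi> m t \<sigma>)"
  shows "lexless q' (\<psi>, m, t) \<or> (q' = (\<psi>, m, t) \<and> isU \<psi>)"
proof -
  have sm: "\<And>f m' t'. q' \<in> pbf_atoms (tr f m' t' \<sigma>) \<Longrightarrow> size f < size \<psi> \<Longrightarrow> lexless q' (\<psi>, m, t)"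
    using atoms_size unfolding lexless_def by fastforce
  show ?thesis
  proof (cases \<psi>)
    case (Neg f) thus ?thesis using assms sm by (cases m) auto
  next
    case (Or f g) thus ?thesis using assms sm by (cases m) auto
  next
    case (Next f) thus ?thesis using assms by (auto simp: lexless_def)
  next
    case (Until f g) thus ?thesis using assms sm by (cases m) auto
  next
    case (DUntil f \<eta> g)
    have d: "discounting \<eta>" using assms DUntil by simp
    show ?thesis
    proof (cases m)
      case Gt
      thus ?thesis using assms sm DUntil KK_shift[OF d]
        by (auto simp: lexless_def split: if_splits)
    next
      case Lt
      thus ?thesis using assms sm DUntil KK_shift[OF d]
        by (auto simp: lexless_def split: if_splits)
    qed
  next
    case LTrue thus ?thesis using assms by (cases m) (auto split: if_splits)
  next
    case (Prop p) thus ?thesis using assms by (cases m) (auto split: if_splits)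
  qed
qed



lemma ev_const:
  fixes p :: "nat \<Rightarrow> nat" and \<mu> :: "nat \<Rightarrow> nat" and rnk :: "nat \<Rightarrow> 'ap comp \<Rightarrow> nat"
  assumes "\<And>i. p (Suc i) = p i \<or> \<mu> (p (Suc i)) < \<mu> (p i)"
  shows "\<exists>N. \<forall>i\<ge>N. p i = p N"
proof -
  define m where "m = (LEAST x. x \<in> range (\<lambda>i. \<mu> (p i)))"
  have "m \<in> range (\<lambda>i. \<mu> (p i))" unfolding m_def by (rule LeastI[of _ "\<mu> (p 0)"]) auto
  then obtain N where N: "\<mu> (p N) = m" by auto
  have lb: "m \<le> \<mu> (p j)" for j unfolding m_def by (rule Least_le) auto
  have "p i = p N" if "N \<le> i" for i
    using that
  proof (induction rule: dec_induct)
    case (step n)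
    show ?case using assms[of n] lb[of "Suc n"] step N by auto
  qed simp
  thus ?thesis by auto
qed

lemma no_desc:
  fixes f :: "nat \<Rightarrow> nat"
  assumes "\<And>i. N \<le> i \<Longrightarrow> f (Suc i) < f i"
  shows False
proof -
  have "f (N + k) + k \<le> f N" for k
  proof (induction k)
    case (Suc k) thus ?case using assms[of "N + k"] by simp
  qed simp
  from this[of "Suc (f N)"] show False by simp
qed

lemma accept_gen:
  fixes A :: "'ap set aba" and \<pi> :: "'ap comp" and \<mu> :: "nat \<Rightarrow> nat" and rnk :: "nat \<Rightarrow> 'ap comp \<Rightarrow> nat"
  assumes mu: "\<And>q \<sigma> q'. q \<in> states A \<Longrightarrow> q' \<in> pbf_atoms (trans A q \<sigma>) \<Longrightarrow> q' = q \<or> \<mu> q' < \<mu> q"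
    and wfA: "\<And>q \<sigma>. q \<in> states A \<Longrightarrow> pbf_atoms (trans A q \<sigma>) \<subseteq> states A"
    and init: "init A \<in> states A"
    and step: "\<And>q \<pi>. q \<in> states A \<Longrightarrow> Gd q \<pi> \<Longrightarrow>
       pbf_sat {q'. Gd q' (suffix_comp 1 \<pi>) \<and> (q' = q \<and> q \<notin> acc A \<longrightarrow> rnk q (suffix_comp 1 \<pi>) < rnk q \<pi>)} (trans A q (\<pi> 0))"
    and g0: "Gd (init A) \<pi>"
  shows "accepts A \<pi>"
proof -
  define S where "S q l = {q' \<in> pbf_atoms (trans A q (\<pi> l)). Gd q' (suffix_comp (Suc l) \<pi>) \<and>
      (q' = q \<and> q \<notin> acc A \<longrightarrow> rnk q (suffix_comp (Suc l) \<pi>) < rnk q (suffix_comp l \<pi>))}" for q l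
  define E where "E l q = (if q \<in> states A \<and> Gd q (suffix_comp l \<pi>) then S q l else {})" for l q
  define R where "R = rec_nat {init A} (\<lambda>l X. \<Union>q\<in>X. E l q)"
  have R0: "R 0 = {init A}" and RS: "R (Suc l) = (\<Union>q\<in>R l. E l q)" for l by (simp_all add: R_def)
  have satS: "pbf_sat (S q l) (trans A q (\<pi> l))" if "q \<in> states A" "Gd q (suffix_comp l \<pi>)" for q l
  proof -
    have "pbf_sat {q'. Gd q' (suffix_comp (Suc l) \<pi>) \<and> (q' = q \<and> q \<notin> acc A \<longrightarrow> rnk q (suffix_comp (Suc l) \<pi>) < rnk q (suffix_comp l \<pi>))} (trans A q (\<pi> l))"
      using step[OF that] by simp
    thus ?thesis by (rule pbf_mono_atoms) (auto simp: S_def)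
  qed
  have inv: "\<forall>q\<in>R l. q \<in> states A \<and> Gd q (suffix_comp l \<pi>)" for l
  proof (induction l)
    case 0 thus ?case using R0 init g0 by simp
  next
    case (Suc l)
    show ?case
    proof
      fix q' assume "q' \<in> R (Suc l)"
      then obtain q where q: "q \<in> R l" "q' \<in> E l q" using RS by auto
      hence "q' \<in> S q l" using Suc E_def by auto
      thus "q' \<in> states A \<and> Gd q' (suffix_comp (Suc l) \<pi>)"
        using wfA[of q "\<pi> l"] Suc q(1) unfolding S_def by auto
    qed
  qed
  have r2: "\<forall>l. R l \<subseteq> states A" using inv by blast
  have r4: "\<forall>l. \<forall>q\<in>R l. pbf_sat (E l q) (trans A q (\<pi> l))"
  proof (intro allI ballI)
    fix l q assume q: "q \<in> R l"
    hence "q \<in> states A" "Gd q (suffix_comp l \<pi>)" using inv by auto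
    thus "pbf_sat (E l q) (trans A q (\<pi> l))" using satS by (simp add: E_def)
  qed
  have run: "is_run A \<pi> R E"
    unfolding is_run_def using R0 RS r2 r4 by blast
  have "accepting_run A E"
    unfolding accepting_run_def
  proof (intro allI impI)
    fix p assume rp: "run_path A E p"
    have pR: "p i \<in> R i" for i
    proof (induction i)
      case 0 thus ?case using rp R0 by (simp add: run_path_def)
    next
      case (Suc i) thus ?case using rp RS by (auto simp: run_path_def)
    qed
    have pS: "p (Suc i) \<in> S (p i) i" for i
    proof -
      have "p (Suc i) \<in> E i (p i)" using rp by (simp add: run_path_def)
      moreover have "p i \<in> states A \<and> Gd (p i) (suffix_comp i \<pi>)" using inv[of i] pR[of i] by blast
      ultimately show ?thesis by (simp add: E_def)
    qed
    have "p (Suc i) = p i \<or> \<mu> (p (Suc i)) < \<mu> (p i)" for i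
    proof -
      have "p (Suc i) \<in> pbf_atoms (trans A (p i) (\<pi> i))" using pS[of i] unfolding S_def by simp
      moreover have "p i \<in> states A" using inv[of i] pR[of i] by blast
      ultimately show ?thesis using mu by blast
    qed
    hence "\<exists>N. \<forall>i\<ge>N. p i = p N" by (rule ev_const)
    then obtain N where N: "\<forall>i\<ge>N. p i = p N" by blast
    show "\<exists>\<^sub>\<infinity>i. p i \<in> acc A"
    proof (cases "p N \<in> acc A")
      case True
      show ?thesis unfolding INFM_nat_le
      proof
        fix m have "p (max m N) = p N" using N[rule_format, of "max m N"] by simp
        thus "\<exists>n\<ge>m. p n \<in> acc A" using True by (intro exI[of _ "max m N"]) simp
      qed
    next
      case False
      have "rnk (p N) (suffix_comp (Suc i) \<pi>) < rnk (p N) (suffix_comp i \<pi>)" if "N \<le> i" for i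
      proof -
        have e: "p (Suc i) = p N" "p i = p N" using N[rule_format, of "Suc i"] N[rule_format, of i] that by simp_all
        show ?thesis using pS[of i] False unfolding S_def e by simp
      qed
      hence False by (rule no_desc[where f="\<lambda>i. rnk (p N) (suffix_comp i \<pi>)" and N=N])
      thus ?thesis ..
    qed
  qed
  thus ?thesis using run unfolding accepts_def by blast
qed

lemma reject_gen:
  fixes A :: "'ap set aba" and \<pi> :: "'ap comp" and \<mu> :: "nat \<Rightarrow> nat" and rnk :: "nat \<Rightarrow> 'ap comp \<Rightarrow> nat"
  assumes mu: "\<And>q \<sigma> q'. q \<in> states A \<Longrightarrow> q' \<in> pbf_atoms (trans A q \<sigma>) \<Longrightarrow> q' = q \<or> \<mu> q' < \<mu> q"
    and step: "\<And>q \<pi> S. q \<in> states A \<Longrightarrow> Bd q \<pi> \<Longrightarrow> pbf_sat S (trans A q (\<pi> 0)) \<Longrightarrow>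
       \<exists>q'\<in>S \<inter> pbf_atoms (trans A q (\<pi> 0)). Bd q' (suffix_comp 1 \<pi>) \<and>
          (q' = q \<and> q \<in> acc A \<longrightarrow> rnk q (suffix_comp 1 \<pi>) < rnk q \<pi>)"
    and acpt: "accepts A \<pi>"
  shows "\<not> Bd (init A) \<pi>"
proof
  assume b0: "Bd (init A) \<pi>"
  obtain R E where run: "is_run A \<pi> R E" and ac: "accepting_run A E"
    using acpt unfolding accepts_def by blast
  have r0: "R 0 = {init A}" and rst: "\<And>l. R l \<subseteq> states A"
    and rS: "\<And>l. R (Suc l) = (\<Union>q\<in>R l. E l q)"
    and rsat: "\<And>l q. q \<in> R l \<Longrightarrow> pbf_sat (E l q) (trans A q (\<pi> l))"
    using run unfolding is_run_def by auto
  define P where "P i q q' \<longleftrightarrow> q' \<in> E i q \<inter> pbf_atoms (trans A q (\<pi> i)) \<and> Bd q' (suffix_comp (Suc i) \<pi>) \<and>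
      (q' = q \<and> q \<in> acc A \<longrightarrow> rnk q (suffix_comp (Suc i) \<pi>) < rnk q (suffix_comp i \<pi>))" for i q q'
  define p where "p = rec_nat (init A) (\<lambda>i q. SOME q'. P i q q')"
  have p0: "p 0 = init A" and pS: "p (Suc i) = (SOME q'. P i (p i) q')" for i by (simp_all add: p_def)
  have exP: "\<exists>q'. P i q q'" if "q \<in> R i" "Bd q (suffix_comp i \<pi>)" for i q
  proof -
    have st: "q \<in> states A" using rst that(1) by blast
    have "pbf_sat (E i q) (trans A q (suffix_comp i \<pi> 0))" using rsat[OF that(1)] by simp
    from step[OF st that(2) this] obtain q' where
      "q' \<in> E i q \<inter> pbf_atoms (trans A q (\<pi> i))" "Bd q' (suffix_comp (Suc i) \<pi>)"
      "q' = q \<and> q \<in> acc A \<longrightarrow> rnk q (suffix_comp (Suc i) \<pi>) < rnk q (suffix_comp i \<pi>)"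
      by auto
    thus ?thesis unfolding P_def by blast
  qed
  have inv: "p i \<in> R i \<and> Bd (p i) (suffix_comp i \<pi>) \<and> P i (p i) (p (Suc i))" for i
  proof (induction i)
    case 0
    have a: "p 0 \<in> R 0" "Bd (p 0) (suffix_comp 0 \<pi>)" using r0 p0 b0 by auto
    have "P 0 (p 0) (p (Suc 0))" unfolding pS by (rule someI_ex[OF exP[OF a]])
    thus ?case using a by simp
  next
    case (Suc i)
    have PP: "P i (p i) (p (Suc i))" using Suc by blast
    have a: "p (Suc i) \<in> R (Suc i)" "Bd (p (Suc i)) (suffix_comp (Suc i) \<pi>)"
      using PP Suc rS[of i] unfolding P_def by auto
    have "P (Suc i) (p (Suc i)) (p (Suc (Suc i)))" unfolding pS[of "Suc i"] by (rule someI_ex[OF exP[OF a]])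
    thus ?case using a by simp
  qed
  have PP: "P i (p i) (p (Suc i))" for i using inv by blast
  have rp: "run_path A E p" unfolding run_path_def using p0 PP unfolding P_def by simp
  hence inf: "\<exists>\<^sub>\<infinity>i. p i \<in> acc A" using ac unfolding accepting_run_def by blast
  have "p (Suc i) = p i \<or> \<mu> (p (Suc i)) < \<mu> (p i)" for i
  proof -
    have "p i \<in> states A" using inv[of i] rst by blast
    moreover have "p (Suc i) \<in> pbf_atoms (trans A (p i) (\<pi> i))" using PP[of i] unfolding P_def by simp
    ultimately show ?thesis using mu by blast
  qed
  hence "\<exists>N. \<forall>i\<ge>N. p i = p N" by (rule ev_const)
  then obtain N where N: "\<forall>i\<ge>N. p i = p N" by blast
  show False
  proof (cases "p N \<in> acc A")
    case False
    from inf obtain n where "n \<ge> N" "p n \<in> acc A" unfolding INFM_nat_le by blast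
    thus False using N[rule_format, of n] False by simp
  next
    case True
    have "rnk (p N) (suffix_comp (Suc i) \<pi>) < rnk (p N) (suffix_comp i \<pi>)" if "N \<le> i" for i
    proof -
      have e: "p (Suc i) = p N" "p i = p N" using N[rule_format, of "Suc i"] N[rule_format, of i] that by simp_all
      show ?thesis using PP[of i] True unfolding P_def e by simp
    qed
    thus False by (rule no_desc[where f="\<lambda>i. rnk (p N) (suffix_comp i \<pi>)" and N=N])
  qed
qed



lemma map_pbf_sat: "pbf_sat S (map_pbf f \<phi>) = pbf_sat (f -` S) \<phi>"
  by (induction \<phi>) auto

lemma map_pbf_atoms: "pbf_atoms (map_pbf f \<phi>) = f ` pbf_atoms \<phi>"
  by (induction \<phi>) auto

lemma lasso_fs:
  assumes "lasso \<pi>" shows "fs \<pi>"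
proof -
  obtain u w where w: "w \<noteq> []" and pi: "\<pi> = (\<lambda>i. if i < length u then u ! i else w ! ((i - length u) mod length w))"
    using assms unfolding lasso_def by blast
  define a where "a = length u"
  define b where "b = length w"
  have pn: "a \<le> n \<Longrightarrow> \<pi> n = w ! ((n - a) mod b)" for n using pi unfolding a_def b_def by simp
  have "suffix_comp i \<pi> \<in> (\<lambda>j. suffix_comp j \<pi>) ` {..<a + b}" for i
  proof (cases "i < a")
    case True thus ?thesis by auto
  next
    case False
    define j where "j = a + (i - a) mod b"
    have b0: "0 < b" using w unfolding b_def by simp
    have jl: "j < a + b" unfolding j_def using b0 by simp
    have "suffix_comp i \<pi> = suffix_comp j \<pi>"
    proof
      fix k
      have "suffix_comp i \<pi> k = w ! ((i - a + k) mod b)" using pn[of "i + k"] False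
        by (simp add: suffix_comp_def)
      also have "\<dots> = w ! (((i - a) mod b + k) mod b)" by (simp add: mod_add_left_eq)
      also have "\<dots> = suffix_comp j \<pi> k" using pn[of "j + k"] by (simp add: suffix_comp_def j_def)
      finally show "suffix_comp i \<pi> k = suffix_comp j \<pi> k" .
    qed
    thus ?thesis using jl by auto
  qed
  hence "range (\<lambda>i. suffix_comp i \<pi>) \<subseteq> (\<lambda>j. suffix_comp j \<pi>) ` {..<a + b}" by auto
  thus ?thesis unfolding fs_def by (rule finite_subset) simp
qed

lemma atoms_dec':
  "dwf (fst q) \<Longrightarrow> q' \<in> pbf_atoms (trq q \<sigma>) \<Longrightarrow> lexless q' q \<or> (q' = q \<and> isU (fst q))"
  by (cases q) (auto dest: atoms_dec)

lemma lemA': "dwf (fst q) \<Longrightarrow> Sem q \<pi> \<Longrightarrow> pbf_sat (GoodA q \<pi>) (trq q (\<pi> 0))"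
  by (cases q) (auto intro: lemA)

lemma lemB': "dwf (fst q) \<Longrightarrow> fs \<pi> \<Longrightarrow> \<not> Sem q \<pi> \<Longrightarrow> \<not> pbf_sat (UNIV - BadB q \<pi>) (trq q (\<pi> 0))"
  by (cases q) (auto dest: lemB)

lemma UG_cases: "isU (fst q) \<Longrightarrow> \<not> isUL q \<Longrightarrow> isUG q"
  by (cases q, rename_tac a b c, case_tac b) auto

theorem theorem1:
  fixes D :: "(nat \<Rightarrow> real) set"
    and \<phi> :: "'ap::finite ltld"
    and v :: real
  assumes "\<forall>\<eta>\<in>D. discounting \<eta>"
    and "ltld_over D \<phi>"
    and "0 \<le> v" and "v \<le> 1"
  shows "\<exists>A :: 'ap set aba. wf_aba A \<and> weak_aba A \<and>
           (\<forall>\<pi> :: 'ap comp.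
              (val \<pi> \<phi> > v \<longrightarrow> accepts A \<pi>) \<and>
              (accepts A \<pi> \<and> lasso \<pi> \<longrightarrow> val \<pi> \<phi> > v))"
proof -
  have d\<phi>: "dwf \<phi>" using assms(1,2) unfolding dwf_def ltld_over_def by blast
  define q0 where "q0 = (\<phi>, Gt, v)"
  define Q where "Q = C \<phi> Gt v"
  have fQ: "finite Q" unfolding Q_def by (rule finite_C)
  have q0Q: "q0 \<in> Q" unfolding Q_def q0_def by (rule self_in)
  define n where "n = card Q"
  obtain h where bij: "bij_betw h {..<n} Q"
    using ex_bij_betw_nat_finite[OF fQ] unfolding n_def atLeast0LessThan by blast
  define dec where "dec = the_inv_into {..<n} h"
  have hQ: "k < n \<Longrightarrow> h k \<in> Q" for k using bij by (auto simp: bij_betw_def)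
  have decQ: "q \<in> Q \<Longrightarrow> dec q < n \<and> h (dec q) = q" for q
  proof (intro conjI)
    assume q: "q \<in> Q"
    have "bij_betw dec Q {..<n}" unfolding dec_def by (rule bij_betw_the_inv_into[OF bij])
    thus "dec q < n" using q by (auto simp: bij_betw_def)
    show "h (dec q) = q" unfolding dec_def using f_the_inv_into_f_bij_betw[OF bij] q by blast
  qed
  have dech: "k < n \<Longrightarrow> dec (h k) = k" for k
    using bij unfolding dec_def bij_betw_def by (simp add: the_inv_into_f_f)
  have clos: "q \<in> Q \<Longrightarrow> pbf_atoms (trq q \<sigma>) \<subseteq> Q" for q \<sigma>
    unfolding Q_def using closure[OF d\<phi>] by blast
  have dwfQ: "q \<in> Q \<Longrightarrow> dwf (fst q)" for q unfolding Q_def using dwf_C[OF d\<phi>] by blast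
  define A :: "'ap set aba" where "A = \<lparr>states = {..<n}, init = dec q0,
      trans = (\<lambda>k \<sigma>. if k < n then map_pbf dec (trq (h k) \<sigma>) else PFalse),
      acc = {k. k < n \<and> isUL (h k)}\<rparr>"
  have A_simps: "states A = {..<n}" "init A = dec q0" "acc A = {k. k < n \<and> isUL (h k)}"
    "k < n \<Longrightarrow> trans A k \<sigma> = map_pbf dec (trq (h k) \<sigma>)" for k \<sigma>
    unfolding A_def by simp_all
  have atomsA: "k < n \<Longrightarrow> pbf_atoms (trans A k \<sigma>) = dec ` pbf_atoms (trq (h k) \<sigma>)" for k \<sigma>
    by (simp add: A_simps map_pbf_atoms)
  define \<mu> where "\<mu> k = card {x \<in> Q. lexless x (h k)}" for k
  have mu: "k' = k \<or> \<mu> k' < \<mu> k" if k: "k \<in> states A" and k': "k' \<in> pbf_atoms (trans A k \<sigma>)" for k k' \<sigma>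
  proof -
    have kn: "k < n" using k A_simps by simp
    obtain q' where q': "q' \<in> pbf_atoms (trq (h k) \<sigma>)" "k' = dec q'" using k' atomsA[OF kn] by auto
    have q'Q: "q' \<in> Q" using clos[OF hQ[OF kn]] q'(1) by blast
    have hk': "h k' = q'" using decQ[OF q'Q] q'(2) by simp
    from atoms_dec'[OF dwfQ[OF hQ[OF kn]] q'(1)]
    show ?thesis
    proof
      assume lx: "lexless q' (h k)"
      have "{x \<in> Q. lexless x q'} \<subset> {x \<in> Q. lexless x (h k)}"
        using lx q'Q lexless_irrefl[of q'] by (auto intro: lexless_trans)
      hence "\<mu> k' < \<mu> k" unfolding \<mu>_def hk' by (intro psubset_card_mono) (auto intro: finite_subset[OF _ fQ])
      thus ?thesis ..
    next
      assume "q' = h k \<and> isU (fst (h k))"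
      hence "k' = k" using q'(2) dech[OF kn] by simp
      thus ?thesis ..
    qed
  qed
  have wfA: "pbf_atoms (trans A k \<sigma>) \<subseteq> states A" if "k \<in> states A" for k \<sigma>
  proof -
    have kn: "k < n" using that A_simps by simp
    show ?thesis using atomsA[OF kn] clos[OF hQ[OF kn]] decQ A_simps by fastforce
  qed
  have wf: "wf_aba A" unfolding wf_aba_def
    using wfA decQ[OF q0Q] A_simps by auto
  have weak: "weak_aba A"
  proof -
    define P where "P = (\<lambda>k. {k}) ` {..<n}"
    define r where "r = {({a}, {b}) | a b. a < n \<and> b < n \<and> (a = b \<or> \<mu> a < \<mu> b)}"
    have "partition_on (states A) P"
      unfolding partition_on_def disjoint_def P_def A_simps by auto
    moreover have "finite P" unfolding P_def by simp
    moreover have "partial_order_on P r"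
      unfolding partial_order_on_def preorder_on_def
    proof (intro conjI)
      show "r \<subseteq> P \<times> P" unfolding r_def P_def by auto
      show "refl_on P r" unfolding refl_on_def r_def P_def by auto
      show "trans_on UNIV r" unfolding r_def by (rule transI) auto
      show "antisym r" unfolding r_def by (rule antisymI) auto
    qed
    moreover have "\<forall>B\<in>P. B \<subseteq> acc A \<or> B \<inter> acc A = {}" unfolding P_def by auto
    moreover have "\<forall>B\<in>P. \<forall>B'\<in>P. \<forall>q\<in>B. \<forall>q'\<in>B'. \<forall>\<sigma>. q' \<in> pbf_atoms (trans A q \<sigma>) \<longrightarrow> (B', B) \<in> r"
    proof (intro ballI allI impI)
      fix B B' q q' \<sigma> assume "B \<in> P" "B' \<in> P" "q \<in> B" "q' \<in> B'" "q' \<in> pbf_atoms (trans A q \<sigma>)"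
      moreover hence "q < n" "q' < n" "B = {q}" "B' = {q'}" unfolding P_def by auto
      moreover have "q' = q \<or> \<mu> q' < \<mu> q" using mu calculation A_simps by auto
      ultimately show "(B', B) \<in> r" unfolding r_def by auto
    qed
    ultimately show ?thesis unfolding weak_aba_def by blast
  qed
  have part1: "accepts A \<pi>" if "v < val \<pi> \<phi>" for \<pi>
  proof (rule accept_gen[where Gd = "\<lambda>k \<pi>. Sem (h k) \<pi>" and rnk = "\<lambda>k \<pi>. rk (h k) \<pi>" and \<mu> = \<mu>])
    show "\<And>q \<sigma> q'. q \<in> states A \<Longrightarrow> q' \<in> pbf_atoms (trans A q \<sigma>) \<Longrightarrow> q' = q \<or> \<mu> q' < \<mu> q"
      using mu by blast
    show "\<And>q \<sigma>. q \<in> states A \<Longrightarrow> pbf_atoms (trans A q \<sigma>) \<subseteq> states A" by (rule wfA)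
    show "init A \<in> states A" using A_simps decQ[OF q0Q] by simp
    show "Sem (h (init A)) \<pi>" using A_simps decQ[OF q0Q] that by (simp add: q0_def)
  next
    fix k and \<pi>' :: "'ap comp"
    assume k: "k \<in> states A" and s: "Sem (h k) \<pi>'"
    have kn: "k < n" using k A_simps by simp
    have g: "pbf_sat (GoodA (h k) \<pi>') (trq (h k) (\<pi>' 0))" using lemA'[OF dwfQ[OF hQ[OF kn]] s] .
    have "pbf_sat (dec -` {q'. Sem (h q') (suffix_comp 1 \<pi>') \<and> (q' = k \<and> k \<notin> acc A \<longrightarrow> rk (h k) (suffix_comp 1 \<pi>') < rk (h k) \<pi>')}) (trq (h k) (\<pi>' 0))"
      using g
    proof (rule pbf_mono_atoms)
      fix q' assume a: "q' \<in> pbf_atoms (trq (h k) (\<pi>' 0))" and gq: "q' \<in> GoodA (h k) \<pi>'"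
      have q'Q: "q' \<in> Q" using clos[OF hQ[OF kn]] a by blast
      have hd: "h (dec q') = q'" using decQ[OF q'Q] by simp
      have "dec q' = k \<and> k \<notin> acc A \<longrightarrow> rk (h k) (suffix_comp 1 \<pi>') < rk (h k) \<pi>'"
      proof
        assume e: "dec q' = k \<and> k \<notin> acc A"
        hence qe: "q' = h k" using hd by auto
        have "isU (fst (h k))" using atoms_dec'[OF dwfQ[OF hQ[OF kn]] a] qe lexless_irrefl[of "h k"] by auto
        moreover have "\<not> isUL (h k)" using e kn A_simps by auto
        ultimately have "isUG (h k)" by (rule UG_cases)
        thus "rk (h k) (suffix_comp 1 \<pi>') < rk (h k) \<pi>'" using gq qe unfolding GoodA_def by auto
      qed
      thus "q' \<in> dec -` {q'. Sem (h q') (suffix_comp 1 \<pi>') \<and> (q' = k \<and> k \<notin> acc A \<longrightarrow> rk (h k) (suffix_comp 1 \<pi>') < rk (h k) \<pi>')}"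
        using gq hd unfolding GoodA_def by auto
    qed
    thus "pbf_sat {q'. Sem (h q') (suffix_comp 1 \<pi>') \<and> (q' = k \<and> k \<notin> acc A \<longrightarrow> rk (h k) (suffix_comp 1 \<pi>') < rk (h k) \<pi>')} (trans A k (\<pi>' 0))"
      using A_simps(4)[OF kn] by (simp add: map_pbf_sat)
  qed
  have part2: "v < val \<pi> \<phi>" if ac: "accepts A \<pi>" and la: "lasso \<pi>" for \<pi>
  proof -
    have "\<not> (fs \<pi> \<and> \<not> Sem (h (init A)) \<pi>)"
    proof (rule reject_gen[where Bd = "\<lambda>k \<pi>. fs \<pi> \<and> \<not> Sem (h k) \<pi>" and rnk = "\<lambda>k \<pi>. rk (h k) \<pi>" and \<mu> = \<mu>])
      show "\<And>q \<sigma> q'. q \<in> states A \<Longrightarrow> q' \<in> pbf_atoms (trans A q \<sigma>) \<Longrightarrow> q' = q \<or> \<mu> q' < \<mu> q"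
        using mu by blast
      show "accepts A \<pi>" by (rule ac)
    next
      fix k and \<pi>' :: "'ap comp" and S
      assume k: "k \<in> states A" and b: "fs \<pi>' \<and> \<not> Sem (h k) \<pi>'" and sat: "pbf_sat S (trans A k (\<pi>' 0))"
      have kn: "k < n" using k A_simps by simp
      have sat': "pbf_sat (dec -` S) (trq (h k) (\<pi>' 0))" using sat A_simps(4)[OF kn] by (simp add: map_pbf_sat)
      have nb: "\<not> pbf_sat (UNIV - BadB (h k) \<pi>') (trq (h k) (\<pi>' 0))"
        using lemB'[OF dwfQ[OF hQ[OF kn]]] b by blast
      obtain q' where a: "q' \<in> pbf_atoms (trq (h k) (\<pi>' 0))" and qS: "q' \<in> dec -` S" and qB: "q' \<in> BadB (h k) \<pi>'"
      proof -
        have "\<exists>q'. q' \<in> pbf_atoms (trq (h k) (\<pi>' 0)) \<and> q' \<in> dec -` S \<and> q' \<in> BadB (h k) \<pi>'"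
        proof (rule ccontr)
          assume "\<not> ?thesis"
          hence "pbf_sat (UNIV - BadB (h k) \<pi>') (trq (h k) (\<pi>' 0))"
            using sat' by (rule_tac pbf_mono_atoms) auto
          thus False using nb by simp
        qed
        thus ?thesis using that by blast
      qed
      have q'Q: "q' \<in> Q" using clos[OF hQ[OF kn]] a by blast
      have hd: "h (dec q') = q'" using decQ[OF q'Q] by simp
      show "\<exists>q'\<in>S \<inter> pbf_atoms (trans A k (\<pi>' 0)). (fs (suffix_comp 1 \<pi>') \<and> \<not> Sem (h q') (suffix_comp 1 \<pi>')) \<and>
          (q' = k \<and> k \<in> acc A \<longrightarrow> rk (h k) (suffix_comp 1 \<pi>') < rk (h k) \<pi>')"
      proof (intro bexI conjI impI)
        show "dec q' \<in> S \<inter> pbf_atoms (trans A k (\<pi>' 0))" using qS a atomsA[OF kn] by auto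
        show "fs (suffix_comp 1 \<pi>')" using b fs_suffix by blast
        show "\<not> Sem (h (dec q')) (suffix_comp 1 \<pi>')" using qB hd unfolding BadB_def by auto
        assume e: "dec q' = k \<and> k \<in> acc A"
        hence qe: "q' = h k" using hd by auto
        have "isUL (h k)" using e A_simps by auto
        thus "rk (h k) (suffix_comp 1 \<pi>') < rk (h k) \<pi>'" using qB qe unfolding BadB_def by auto
      qed
    qed
    moreover have "fs \<pi>" using la by (rule lasso_fs)
    ultimately show ?thesis using A_simps decQ[OF q0Q] by (simp add: q0_def)
  qed
  show ?thesis using wf weak part1 part2 by blast
qed

end
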